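(* Let $C(r)$ be a real-analytic regular parameterization of a convex plane arc, extended holomorphically to a complex neighbourhood of its parameter interval, and with $z=s+it$, $t>0$, define $P(s,t)=\tfrac12(C(z)+C(\overline{z}))$, $F(s,t)=i f(s,it)$ (notation of the context) and $Q(s,t)=(P(s,t),F(s,t))$. Then: (1) $(s,t)$ are isothermal parameters of $Q$, i.e. $[Q_s,Q_t,Q_{ss}]=[Q_s,Q_t,Q_{tt}]$ and $[Q_s,Q_t,Q_{st}]=0$, and $Q$ parameterizes a definite improper affine sphere: locally it is the graph of $F$ over the plane with $\det D^2F=+1$; (2) the surface does not depend on the choice of the analytic parameterization of $C$: if $\psi$ is an analytic reparameterization (real on the real line) and $F_1$ is the function built from $C\circ\psi$, then $F_1=F\circ\psi$ and the same surface is obtained; (3) $\Omega(s,t)=-i\,\omega(s,it)$, where $\Omega(s,t)=\tfrac12[P_t,P_s]$ and $\omega(s,t)=\tfrac12[p_s,p_t]$ with $p(s,t)=\tfrac12(C(s+t)+C(s-t))$; moreover $A=\tfrac{i}{4}[C'(z),C''(z)]$ and $B=-\tfrac{i}{4}[C'(\overline{z}),C''(\overline{z})]$, i.e. $A$ and $B$ are $i$ and $-i$ times the corresponding inner quantities $\tfrac14[C'(\cdot),C''(\cdot)]$ and $-\tfrac14[C'(\cdot),C''(\cdot)]$ evaluated at the complexified arguments; (4) consequently, if $C$ is strictly convex, the Pick invariant $J=AB/\Omega^3$ does not vanish.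
   Context: $[X,Y]$ is the $2\times2$ determinant with columns $X,Y$ and $[X,Y,Z]$ the $3\times3$ determinant with columns $X,Y,Z$ (extended to complex vectors); $R$ is the counterclockwise rotation by ninety degrees. The inner area distance in coordinates $(s,t)$ is $f(s,t)=\tfrac14\int_{s-t}^{s+t}[C(r)-p(s,t),C'(r)]\,dr$, with the curve oriented so that this equals half the minimal chord-cut area at $p(s,t)$; $f(s,it)$ is its holomorphic continuation. Treating $z,\overline{z}$ as independent variables, $P_z=\tfrac12C'(z)$, $P_{\overline{z}}=\tfrac12 C'(\overline{z})$, and the structure quantities of the definite sphere are $A=i[P_z,P_{zz}]$, $B=-i[P_{\overline{z}},P_{\overline{z}\overline{z}}]$; the Pick invariant is $J=AB/\Omega^3$. *)

theory Defs
  imports "HOL-Complex_Analysis.Complex_Analysis"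
begin

text \<open>Plane vectors (extended to complex vectors) are pairs of complex numbers,
  space vectors are triples.\<close>

definition det2 :: "complex \<times> complex \<Rightarrow> complex \<times> complex \<Rightarrow> complex" where
  "det2 X Y = fst X * snd Y - snd X * fst Y"

definition det3 :: "complex \<times> complex \<times> complex \<Rightarrow> complex \<times> complex \<times> complex
                      \<Rightarrow> complex \<times> complex \<times> complex \<Rightarrow> complex" where
  "det3 X Y Z = (case X of (x1, x2, x3) \<Rightarrow> case Y of (y1, y2, y3) \<Rightarrow> case Z of (z1, z2, z3) \<Rightarrow>
      x1 * (y2 * z3 - y3 * z2) - y1 * (x2 * z3 - x3 * z2) + z1 * (x2 * y3 - x3 * y2))"

definition vderiv :: "(complex \<Rightarrow> complex \<times> complex) \<Rightarrow> complex \<Rightarrow> complex \<times> complex" where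
  "vderiv C z = (deriv (\<lambda>w. fst (C w)) z, deriv (\<lambda>w. snd (C w)) z)"

definition cpd1 :: "(complex \<Rightarrow> complex \<Rightarrow> complex \<times> complex) \<Rightarrow> complex \<Rightarrow> complex \<Rightarrow> complex \<times> complex" where
  "cpd1 g x y = (deriv (\<lambda>u. fst (g u y)) x, deriv (\<lambda>u. snd (g u y)) x)"

definition cpd2 :: "(complex \<Rightarrow> complex \<Rightarrow> complex \<times> complex) \<Rightarrow> complex \<Rightarrow> complex \<Rightarrow> complex \<times> complex" where
  "cpd2 g x y = (deriv (\<lambda>u. fst (g x u)) y, deriv (\<lambda>u. snd (g x u)) y)"

definition pd1 :: "(real \<times> real \<Rightarrow> 'v::real_normed_vector) \<Rightarrow> real \<times> real \<Rightarrow> 'v" where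
  "pd1 g st = vector_derivative (\<lambda>x. g (x, snd st)) (at (fst st))"

definition pd2 :: "(real \<times> real \<Rightarrow> 'v::real_normed_vector) \<Rightarrow> real \<times> real \<Rightarrow> 'v" where
  "pd2 g st = vector_derivative (\<lambda>y. g (fst st, y)) (at (snd st))"

definition pc :: "(complex \<Rightarrow> complex \<times> complex) \<Rightarrow> complex \<Rightarrow> complex \<Rightarrow> complex \<times> complex" where
  "pc C s \<tau> = (1/2) *\<^sub>R (C (s + \<tau>) + C (s - \<tau>))"

text \<open>For real s, \<tau> this is the real integral; for complex \<tau> it is its holomorphic
  continuation, given by the integral along the straight segment.\<close>
definition fc :: "(complex \<Rightarrow> complex \<times> complex) \<Rightarrow> complex \<Rightarrow> complex \<Rightarrow> complex" where
  "fc C s \<tau> = (1/4) * contour_integral (linepath (s - \<tau>) (s + \<tau>))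
                        (\<lambda>w. det2 (C w - pc C s \<tau>) (vderiv C w))"

definition Pm :: "(complex \<Rightarrow> complex \<times> complex) \<Rightarrow> real \<times> real \<Rightarrow> complex \<times> complex" where
  "Pm C st = (1/2) *\<^sub>R (C (Complex (fst st) (snd st)) + C (Complex (fst st) (- snd st)))"

definition Fm :: "(complex \<Rightarrow> complex \<times> complex) \<Rightarrow> real \<times> real \<Rightarrow> complex" where
  "Fm C st = \<i> * fc C (of_real (fst st)) (\<i> * of_real (snd st))"

definition Qm :: "(complex \<Rightarrow> complex \<times> complex) \<Rightarrow> real \<times> real \<Rightarrow> complex \<times> complex \<times> complex" where
  "Qm C st = (fst (Pm C st), snd (Pm C st), Fm C st)"

definition Omega :: "(complex \<Rightarrow> complex \<times> complex) \<Rightarrow> real \<times> real \<Rightarrow> complex" where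
  "Omega C st = (1/2) * det2 (pd2 (Pm C) st) (pd1 (Pm C) st)"

definition omegac :: "(complex \<Rightarrow> complex \<times> complex) \<Rightarrow> complex \<Rightarrow> complex \<Rightarrow> complex" where
  "omegac C s \<tau> = (1/2) * det2 (cpd1 (pc C) s \<tau>) (cpd2 (pc C) s \<tau>)"

text \<open>P as a function of independent variables z and zbar.\<close>
definition Pzw :: "(complex \<Rightarrow> complex \<times> complex) \<Rightarrow> complex \<Rightarrow> complex \<Rightarrow> complex \<times> complex" where
  "Pzw C z w = (1/2) *\<^sub>R (C z + C w)"

definition Astr :: "(complex \<Rightarrow> complex \<times> complex) \<Rightarrow> real \<times> real \<Rightarrow> complex" where
  "Astr C st = (let z = Complex (fst st) (snd st) in
     \<i> * det2 (cpd1 (Pzw C) z (cnj z)) (cpd1 (cpd1 (Pzw C)) z (cnj z)))"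

definition Bstr :: "(complex \<Rightarrow> complex \<times> complex) \<Rightarrow> real \<times> real \<Rightarrow> complex" where
  "Bstr C st = (let z = Complex (fst st) (snd st) in
     - \<i> * det2 (cpd2 (Pzw C) z (cnj z)) (cpd2 (cpd2 (Pzw C)) z (cnj z)))"

definition Jpick :: "(complex \<Rightarrow> complex \<times> complex) \<Rightarrow> real \<times> real \<Rightarrow> complex" where
  "Jpick C st = Astr C st * Bstr C st / Omega C st ^ 3"

definition sdom :: "complex set \<Rightarrow> (real \<times> real) set" where
  "sdom U = {(s, t). 0 < t \<and> closed_segment (Complex s (- t)) (Complex s t) \<subseteq> U}"

definition definite_graph_at :: "(complex \<Rightarrow> complex \<times> complex) \<Rightarrow> real \<times> real \<Rightarrow> bool" where
  "definite_graph_at C st \<longleftrightarrow>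
     (\<exists>W V (u :: real \<times> real \<Rightarrow> real).
        open W \<and> st \<in> W \<and> open V \<and>
        bij_betw (\<lambda>q. (Re (fst (Pm C q)), Re (snd (Pm C q)))) W V \<and>
        (\<forall>q\<in>W. Fm C q = of_real (u (Re (fst (Pm C q)), Re (snd (Pm C q))))) \<and>
        (\<forall>x\<in>V. u differentiable (at x) \<and> pd1 u differentiable (at x) \<and>
                 pd2 u differentiable (at x) \<and>
                 pd1 (pd1 u) x * pd2 (pd2 u) x - pd1 (pd2 u) x * pd2 (pd1 u) x = 1))"

end

theory Submission
  imports Defs
begin


lemma open_cnj_image: "open S \<Longrightarrow> open (cnj ` (S::complex set))"
  unfolding image_cnj_conv_vimage_cnj by (intro open_vimage) (auto intro: continuous_intros)

lemma convex_cnj_image: "convex S \<Longrightarrow> convex (cnj ` (S::complex set))"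
  by (rule convex_linear_image) (simp add: bounded_linear.linear bounded_linear_cnj)

lemma islimpt_interval_real:
  assumes "a < b"
  shows "of_real ((a+b)/2) islimpt (of_real ` {a<..<b} :: complex set)"
unfolding islimpt_approachable
proof (intro allI impI)
  fix e :: real assume e: "e > 0"
  obtain d where d: "d > 0" "d \<le> e/2" "d \<le> (b-a)/4"
    using e assms by (intro that[of "min (e/2) ((b-a)/4)"]) (auto simp: min_def)
  have 1: "(a+b)/2 + d \<in> {a<..<b}" using d assms by (simp add: field_simps)
  have "dist (complex_of_real ((a+b)/2 + d)) (complex_of_real ((a + b) / 2)) = d"
    using d by (simp add: dist_norm flip: of_real_diff)
  then have 2: "complex_of_real ((a+b)/2 + d) \<noteq> complex_of_real ((a + b) / 2) \<and> dist (complex_of_real ((a+b)/2 + d)) (complex_of_real ((a + b) / 2)) < e"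
    using d e by (auto simp: field_simps)
  show "\<exists>x'\<in>complex_of_real ` {a<..<b}. x' \<noteq> complex_of_real ((a + b) / 2) \<and> dist x' (complex_of_real ((a + b) / 2)) < e"
    using 1 2 by blast
qed

lemma reflect:
  fixes h :: "complex \<Rightarrow> complex" and S :: "complex set"
  assumes "open S" "convex S" "a < b" "of_real ` {a<..<b} \<subseteq> S" "h holomorphic_on S"
    "\<forall>r\<in>{a<..<b}. Im (h (of_real r)) = 0"
    "z \<in> S" "cnj z \<in> S"
  shows "h (cnj z) = cnj (h z)"
proof -
  let ?K = "S \<inter> cnj ` S"
  have oK: "open ?K" using assms open_cnj_image by blast
  have cK: "convex ?K" using assms convex_cnj_image convex_Int by blast
  have hc: "h holomorphic_on cnj ` ?K"
    by (rule holomorphic_on_subset[OF assms(5)]) auto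
  have hol: "(\<lambda>z. (cnj \<circ> h \<circ> cnj) z - h z) holomorphic_on ?K"
    by (intro holomorphic_intros holomorphic_on_compose_cnj_cnj hc oK
        holomorphic_on_subset[OF assms(5)]) auto
  have sub: "of_real ` {a<..<b} \<subseteq> ?K" using assms(4) by force
  have "(a+b)/2 \<in> {a<..<b}" using assms(3) by auto
  then have m: "of_real ((a+b)/2) \<in> ?K" using sub by blast
  have "(\<lambda>z. (cnj \<circ> h \<circ> cnj) z - h z) z = 0"
  proof (rule analytic_continuation[OF hol oK convex_connected[OF cK] sub m islimpt_interval_real[OF assms(3)]])
    fix w assume "w \<in> (of_real ` {a<..<b} :: complex set)"
    then obtain r where r: "r \<in> {a<..<b}" "w = of_real r" by auto
    have "cnj w = w" using r by simp
    then have "h (cnj w) = h w" by simp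
    moreover have "Im (h w) = 0" using assms(6) r by auto
    ultimately show "(cnj \<circ> h \<circ> cnj) w - h w = 0"
      by (simp add: complex_eq_iff)
  next
    show "z \<in> ?K" using assms(7,8) by (auto intro: image_eqI[of _ _ "cnj z"])
  qed
  then show ?thesis by (simp add: complex_eq_iff)
qed

lemma fc_closed:
  fixes D :: "complex \<Rightarrow> complex \<times> complex" and S :: "complex set"
  assumes cS: "convex S" and oS: "open S"
    and h1: "(\<lambda>z. fst (D z)) holomorphic_on S" and h2: "(\<lambda>z. snd (D z)) holomorphic_on S"
    and Gd: "\<And>w. w \<in> S \<Longrightarrow> (Gd has_field_derivative det2 (D w) (vderiv D w)) (at w)"
    and m: "s - \<tau> \<in> S" and p: "s + \<tau> \<in> S"
  shows "fc D s \<tau> = 1/4 * (Gd (s+\<tau>) - Gd (s-\<tau>) + det2 (D (s+\<tau>)) (D (s-\<tau>)))"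
proof -
  define pp where "pp = pc D s \<tau>"
  define H where "H = (\<lambda>w. Gd w - (fst pp * snd (D w) - snd pp * fst (D w)))"
  have dH: "(H has_field_derivative det2 (D w - pp) (vderiv D w)) (at w within S)" if w: "w \<in> S" for w
  proof -
    have d1: "((\<lambda>z. fst (D z)) has_field_derivative deriv (\<lambda>z. fst (D z)) w) (at w)"
      using holomorphic_derivI[OF h1 oS w] .
    have d2: "((\<lambda>z. snd (D z)) has_field_derivative deriv (\<lambda>z. snd (D z)) w) (at w)"
      using holomorphic_derivI[OF h2 oS w] .
    have "(H has_field_derivative det2 (D w) (vderiv D w) - (fst pp * deriv (\<lambda>z. snd (D z)) w - snd pp * deriv (\<lambda>z. fst (D z)) w)) (at w)"
      unfolding H_def by (intro DERIV_diff DERIV_cmult Gd w d1 d2)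
    moreover have "det2 (D w) (vderiv D w) - (fst pp * deriv (\<lambda>z. snd (D z)) w - snd pp * deriv (\<lambda>z. fst (D z)) w)
        = det2 (D w - pp) (vderiv D w)"
      by (simp add: det2_def vderiv_def algebra_simps)
    ultimately show ?thesis by (simp add: has_field_derivative_at_within)
  qed
  have seg: "path_image (linepath (s - \<tau>) (s + \<tau>)) \<subseteq> S"
    using closed_segment_subset[OF m p cS] by simp
  have "((\<lambda>w. det2 (D w - pp) (vderiv D w)) has_contour_integral (H (s+\<tau>) - H (s-\<tau>))) (linepath (s - \<tau>) (s + \<tau>))"
    using contour_integral_primitive[OF dH valid_path_linepath seg] by simp
  then have "fc D s \<tau> = 1/4 * (H (s+\<tau>) - H (s-\<tau>))"
    unfolding fc_def pp_def by (simp add: contour_integral_unique)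
  also have "\<dots> = 1/4 * (Gd (s+\<tau>) - Gd (s-\<tau>) + det2 (D (s+\<tau>)) (D (s-\<tau>)))"
    unfolding H_def pp_def pc_def det2_def by (simp add: algebra_simps scaleR_conv_of_real)
  finally show ?thesis .
qed

lemma cnj_Complex: "cnj (Complex a b) = Complex a (-b)"
  by (simp add: complex_eq_iff)

lemma Complex_plus_minus:
  "complex_of_real s + \<i> * complex_of_real t = Complex s t"
  "complex_of_real s - \<i> * complex_of_real t = Complex s (- t)"
  by (simp_all add: complex_eq_iff)

lemma vd_s:
  assumes "((\<lambda>u. E (u + \<i> * of_real t) (u - \<i> * of_real t)) has_field_derivative d) (at (of_real s))"
  shows "((\<lambda>x. E (Complex x t) (Complex x (-t))) has_vector_derivative d) (at s)"
  using has_vector_derivative_real_field[OF assms] by (simp add: Complex_plus_minus)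

lemma vd_t:
  assumes "((\<lambda>v. E (of_real s + \<i> * v) (of_real s - \<i> * v)) has_field_derivative d) (at (of_real t))"
  shows "((\<lambda>y. E (Complex s y) (Complex s (-y))) has_vector_derivative d) (at t)"
  using has_vector_derivative_real_field[OF assms] by (simp add: Complex_plus_minus)

lemma chain_gen:
  assumes "h holomorphic_on S" "open S"
    "(f has_field_derivative f') (at x within T)" "f x \<in> S" "Dd = deriv h (f x) * f'"
  shows "((\<lambda>u. h (f u)) has_field_derivative Dd) (at x within T)"
  using DERIV_chain2[OF holomorphic_derivI[OF assms(1,2,4)] assms(3)] assms(5) by simp

lemma pd1_at: "((\<lambda>x. f (x, snd q)) has_vector_derivative d) (at (fst q)) \<Longrightarrow> pd1 f q = d"
  by (simp add: pd1_def vector_derivative_at)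
lemma pd2_at: "((\<lambda>y. f (fst q, y)) has_vector_derivative d) (at (snd q)) \<Longrightarrow> pd2 f q = d"
  by (simp add: pd2_def vector_derivative_at)

lemma open_slice1: "open (Om::(real\<times>real) set) \<Longrightarrow> open {x. (x, y) \<in> Om}"
proof -
  assume o: "open Om"
  have "continuous_on UNIV (\<lambda>x::real. (x, y))" by (intro continuous_intros)
  from open_vimage[OF o this] show ?thesis by (simp add: vimage_def)
qed
lemma open_slice2: "open (Om::(real\<times>real) set) \<Longrightarrow> open {y. (x, y) \<in> Om}"
proof -
  assume o: "open Om"
  have "continuous_on UNIV (\<lambda>y::real. (x, y))" by (intro continuous_intros)
  from open_vimage[OF o this] show ?thesis by (simp add: vimage_def)
qed

lemma pd1_cong:
  assumes Om: "open Om" "q \<in> Om" and eq: "\<And>p. p \<in> Om \<Longrightarrow> f p = g p"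
  shows "pd1 f q = pd1 g q"
proof -
  let ?S = "{x. (x, snd q) \<in> Om}"
  have S: "open ?S" "fst q \<in> ?S" using Om open_slice1 by auto
  have "((\<lambda>x. f (x, snd q)) has_vector_derivative d) (at (fst q)) \<longleftrightarrow>
        ((\<lambda>x. g (x, snd q)) has_vector_derivative d) (at (fst q))" for d
    using has_vector_derivative_transform_within_open[OF _ S, of "\<lambda>x. f (x, snd q)" d "\<lambda>x. g (x, snd q)"]
      has_vector_derivative_transform_within_open[OF _ S, of "\<lambda>x. g (x, snd q)" d "\<lambda>x. f (x, snd q)"]
      eq by auto
  then show ?thesis unfolding pd1_def vector_derivative_def by simp
qed

lemma pd2_cong:
  assumes Om: "open Om" "q \<in> Om" and eq: "\<And>p. p \<in> Om \<Longrightarrow> f p = g p"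
  shows "pd2 f q = pd2 g q"
proof -
  let ?S = "{y. (fst q, y) \<in> Om}"
  have S: "open ?S" "snd q \<in> ?S" using Om open_slice2 by auto
  have "((\<lambda>y. f (fst q, y)) has_vector_derivative d) (at (snd q)) \<longleftrightarrow>
        ((\<lambda>y. g (fst q, y)) has_vector_derivative d) (at (snd q))" for d
    using has_vector_derivative_transform_within_open[OF _ S, of "\<lambda>y. f (fst q, y)" d "\<lambda>y. g (fst q, y)"]
      has_vector_derivative_transform_within_open[OF _ S, of "\<lambda>y. g (fst q, y)" d "\<lambda>y. f (fst q, y)"]
      eq by auto
  then show ?thesis unfolding pd2_def vector_derivative_def by simp
qed

lemma differentiable_cong_open:
  assumes Om: "open Om" "q \<in> Om" and eq: "\<And>p. p \<in> Om \<Longrightarrow> f p = g p" and d: "g differentiable (at q)"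
  shows "f differentiable (at q)"
proof -
  obtain D where "(g has_derivative D) (at q)" using d unfolding differentiable_def by blast
  then have "(f has_derivative D) (at q)"
    by (rule has_derivative_transform_within_open[OF _ Om]) (simp add: eq)
  then show ?thesis unfolding differentiable_def by blast
qed

definition trip :: "(complex \<Rightarrow> complex \<Rightarrow> complex) \<Rightarrow> (complex \<Rightarrow> complex \<Rightarrow> complex) \<Rightarrow> (complex \<Rightarrow> complex \<Rightarrow> complex)
   \<Rightarrow> real \<times> real \<Rightarrow> complex \<times> complex \<times> complex" where
  "trip E1 E2 E3 q = (E1 (Complex (fst q) (snd q)) (Complex (fst q) (- snd q)),
     E2 (Complex (fst q) (snd q)) (Complex (fst q) (- snd q)), E3 (Complex (fst q) (snd q)) (Complex (fst q) (- snd q)))"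

lemma trip_pd1:
  assumes "\<And>E F. (E,F) \<in> {(E1,F1),(E2,F2),(E3,F3)} \<Longrightarrow>
     ((\<lambda>u. E (u + \<i> * of_real (snd q)) (u - \<i> * of_real (snd q))) has_field_derivative F (Complex (fst q) (snd q)) (Complex (fst q) (- snd q))) (at (of_real (fst q)))"
  shows "pd1 (trip E1 E2 E3) q = trip F1 F2 F3 q"
  by (rule pd1_at) (auto simp: trip_def intro!: has_vector_derivative_Pair vd_s assms)

lemma trip_pd2:
  assumes "\<And>E F. (E,F) \<in> {(E1,F1),(E2,F2),(E3,F3)} \<Longrightarrow>
     ((\<lambda>v. E (of_real (fst q) + \<i> * v) (of_real (fst q) - \<i> * v)) has_field_derivative F (Complex (fst q) (snd q)) (Complex (fst q) (- snd q))) (at (of_real (snd q)))"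
  shows "pd2 (trip E1 E2 E3) q = trip F1 F2 F3 q"
  by (rule pd2_at) (auto simp: trip_def intro!: has_vector_derivative_Pair vd_t assms)

lemma omega_alg:
  fixes d x1 x2 y1 y2 :: complex
  assumes "d \<noteq> 0"
  shows "\<i>/4 * det2 (x1, x2) (y1, y2) = \<i>/4 * d * det2 ((x1 - y1)/d, (x2 - y2)/d) (y1, y2)"
proof -
  have "d * det2 ((x1 - y1)/d, (x2 - y2)/d) (y1, y2) = (x1 - y1) * y2 - (x2 - y2) * y1"
    using assms by (simp add: det2_def right_diff_distrib)
  also have "\<dots> = det2 (x1, x2) (y1, y2)" by (simp add: det2_def algebra_simps)
  finally show ?thesis by (simp add: mult.assoc)
qed

lemma iso_alg:
  fixes c1 c2 p1 p2 r1 r2 d1 d2 q1 q2 u1 u2 gz gw hz hw :: complex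
  assumes "gz = c1*p2 - c2*p1" "gw = d1*q2 - d2*q1" "hz = c1*r2 - c2*r1" "hw = d1*u2 - d2*u1"
  shows "det3 ((p1+q1)/2, (p2+q2)/2, \<i>/4 * (gz - gw + p1*d2 + c1*q2 - p2*d1 - c2*q1))
              (\<i>*(p1-q1)/2, \<i>*(p2-q2)/2, -1/4 * (gz + gw + p1*d2 - c1*q2 - p2*d1 + c2*q1))
              ((r1+u1)/2, (r2+u2)/2, \<i>/4*(hz - hw + r1*d2 + 2*p1*q2 + c1*u2 - r2*d1 - 2*p2*q1 - c2*u1))
       = det3 ((p1+q1)/2, (p2+q2)/2, \<i>/4 * (gz - gw + p1*d2 + c1*q2 - p2*d1 - c2*q1))
              (\<i>*(p1-q1)/2, \<i>*(p2-q2)/2, -1/4 * (gz + gw + p1*d2 - c1*q2 - p2*d1 + c2*q1))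
              (-(r1+u1)/2, -(r2+u2)/2, -\<i>/4*(hz - hw + r1*d2 - 2*p1*q2 + c1*u2 - r2*d1 + 2*p2*q1 - c2*u1))"
    "det3 ((p1+q1)/2, (p2+q2)/2, \<i>/4 * (gz - gw + p1*d2 + c1*q2 - p2*d1 - c2*q1))
              (\<i>*(p1-q1)/2, \<i>*(p2-q2)/2, -1/4 * (gz + gw + p1*d2 - c1*q2 - p2*d1 + c2*q1))
              (\<i>*(r1-u1)/2, \<i>*(r2-u2)/2, -1/4*(hz + hw + r1*d2 - c1*u2 - r2*d1 + c2*u1)) = 0"
  unfolding assms det3_def case_prod_conv by (simp_all add: field_simps ring_distribs)

lemma bl_Complex: "bounded_linear (\<lambda>q::real\<times>real. Complex (fst q) (snd q))"
proof -
  have "(\<lambda>q::real\<times>real. Complex (fst q) (snd q)) = (\<lambda>q. fst q *\<^sub>R 1 + snd q *\<^sub>R \<i>)"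
    by (auto simp: complex_eq_iff)
  moreover have "bounded_linear (\<lambda>q::real\<times>real. fst q *\<^sub>R (1::complex) + snd q *\<^sub>R \<i>)"
    by (intro bounded_linear_add bounded_linear_compose[OF bounded_linear_scaleR_left bounded_linear_fst]
        bounded_linear_compose[OF bounded_linear_scaleR_left bounded_linear_snd])
  ultimately show ?thesis by simp
qed
lemma bl_Complex': "bounded_linear (\<lambda>q::real\<times>real. Complex (fst q) (- snd q))"
proof -
  have "(\<lambda>q::real\<times>real. Complex (fst q) (- snd q)) = (\<lambda>q. fst q *\<^sub>R 1 + snd q *\<^sub>R (- \<i>))"
    by (auto simp: complex_eq_iff)
  moreover have "bounded_linear (\<lambda>q::real\<times>real. fst q *\<^sub>R (1::complex) + snd q *\<^sub>R (-\<i>))"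
    by (intro bounded_linear_add bounded_linear_compose[OF bounded_linear_scaleR_left bounded_linear_fst]
        bounded_linear_compose[OF bounded_linear_scaleR_left bounded_linear_snd])
  ultimately show ?thesis by simp
qed

lemma hol_diffZ:
  assumes "h holomorphic_on S" "open S" "Complex (fst p) (snd p) \<in> S"
  shows "(\<lambda>q. h (Complex (fst q) (snd q))) differentiable (at p)"
proof -
  have "h differentiable (at (Complex (fst p) (snd p)))"
    using assms by (meson field_differentiable_imp_differentiable holomorphic_on_imp_differentiable_at)
  from differentiable_chain_at[OF bounded_linear_imp_differentiable[OF bl_Complex] this]
  show ?thesis by (simp add: o_def)
qed
lemma hol_diffW:
  assumes "h holomorphic_on S" "open S" "Complex (fst p) (- snd p) \<in> S"
  shows "(\<lambda>q. h (Complex (fst q) (- snd q))) differentiable (at p)"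
proof -
  have "h differentiable (at (Complex (fst p) (- snd p)))"
    using assms by (meson field_differentiable_imp_differentiable holomorphic_on_imp_differentiable_at)
  from differentiable_chain_at[OF bounded_linear_imp_differentiable[OF bl_Complex'] this]
  show ?thesis by (simp add: o_def)
qed

definition mat2 :: "real \<Rightarrow> real \<Rightarrow> real \<Rightarrow> real \<Rightarrow> ((real \<times> real) \<Rightarrow>\<^sub>L (real \<times> real))" where
  "mat2 a b c d = Blinfun (\<lambda>v. (a * fst v + b * snd v, c * fst v + d * snd v))"

lemma bl_mat2: "bounded_linear (\<lambda>v::real\<times>real. (a * fst v + b * snd v, c * fst v + d * snd v))"
  unfolding linear_conv_bounded_linear[symmetric]
  by (rule linearI) (auto simp: algebra_simps)

lemma mat2_apply: "blinfun_apply (mat2 a b c d) v = (a * fst v + b * snd v, c * fst v + d * snd v)"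
  unfolding mat2_def using bl_mat2 by (simp add: bounded_linear_Blinfun_apply)

lemma mat2_decomp: "mat2 a b c d = a *\<^sub>R mat2 1 0 0 0 + b *\<^sub>R mat2 0 1 0 0 + c *\<^sub>R mat2 0 0 1 0 + d *\<^sub>R mat2 0 0 0 1"
  by (rule blinfun_eqI) (simp add: mat2_apply plus_blinfun.rep_eq scaleR_blinfun.rep_eq)

lemma mat2_cont:
  assumes "continuous_on S a" "continuous_on S b" "continuous_on S c" "continuous_on S d"
  shows "continuous_on S (\<lambda>x. mat2 (a x) (b x) (c x) (d x))"
  by (subst mat2_decomp) (intro continuous_intros assms)

lemma hess_alg:
  fixes ar ai br bi x1 y1 x2 y2 :: real
  assumes "ar*x1 + - ai*y1 = 1" "br*x1 + - bi*y1 = 0" "ar*x2 + - ai*y2 = 0" "br*x2 + - bi*y2 = 1"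
  shows "(br*y1 + bi*x1) * (-(ar*y2 + ai*x2)) - (-(ar*y1 + ai*x1)) * (br*y2 + bi*x2) = 1"
proof -
  have "(br*y1 + bi*x1) * (-(ar*y2 + ai*x2)) - (-(ar*y1 + ai*x1)) * (br*y2 + bi*x2)
      = (ar*x1 + - ai*y1) * (br*x2 + - bi*y2) - (br*x1 + - bi*y1) * (ar*x2 + - ai*y2)"
    by (simp add: algebra_simps)
  then show ?thesis using assms by simp
qed

lemma inv_mat2:
  assumes "a * d - b * c \<noteq> 0"
  shows "mat2 (d / (a*d - b*c)) (- b / (a*d - b*c)) (- c / (a*d - b*c)) (a / (a*d - b*c)) o\<^sub>L mat2 a b c d = id_blinfun"
proof (rule blinfun_eqI)
  fix i :: "real \<times> real"
  obtain x y where i: "i = (x, y)" by (cases i)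
  define D where "D = a * d - b * c"
  have D0: "D \<noteq> 0" using assms D_def by simp
  have e1: "d / D * (a * x + b * y) + - b / D * (c * x + d * y) = x"
  proof -
    have "d / D * (a * x + b * y) + - b / D * (c * x + d * y) = (d * (a * x + b * y) - b * (c * x + d * y)) / D"
      using D0 by (simp add: field_simps)
    also have "d * (a * x + b * y) - b * (c * x + d * y) = x * D" by (simp add: D_def algebra_simps)
    finally show ?thesis using D0 by simp
  qed
  have e2: "- c / D * (a * x + b * y) + a / D * (c * x + d * y) = y"
  proof -
    have "- c / D * (a * x + b * y) + a / D * (c * x + d * y) = (a * (c * x + d * y) - c * (a * x + b * y)) / D"
      using D0 by (simp add: field_simps)
    also have "a * (c * x + d * y) - c * (a * x + b * y) = y * D" by (simp add: D_def algebra_simps)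
    finally show ?thesis using D0 by simp
  qed
  show "blinfun_apply (mat2 (d / (a*d - b*c)) (- b / (a*d - b*c)) (- c / (a*d - b*c)) (a / (a*d - b*c)) o\<^sub>L mat2 a b c d) i
        = blinfun_apply id_blinfun i"
    using e1 e2 unfolding D_def by (simp add: i mat2_apply)
qed

lemma pd_of_hasd:
  assumes "(f has_derivative D) (at x)"
  shows "pd1 f x = D (1,0)" "pd2 f x = D (0,1)"
proof -
  have lin: "linear D" using assms has_derivative_linear by blast
  have "((\<lambda>y. (y, snd x)) has_derivative (\<lambda>h. (h, 0))) (at (fst x))"
    by (rule has_derivative_Pair[OF has_derivative_ident has_derivative_const])
  from has_derivative_compose[OF this] assms
  have "((\<lambda>y. f (y, snd x)) has_derivative (\<lambda>h. D (h, 0))) (at (fst x))" by simp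
  moreover have "(\<lambda>h. D (h, 0)) = (\<lambda>h. h *\<^sub>R D (1,0))"
  proof
    fix h :: real
    have "D (h, 0) = D (h *\<^sub>R (1,0))" by simp
    also have "\<dots> = h *\<^sub>R D (1,0)" by (rule linear_cmul[OF lin])
    finally show "D (h, 0) = h *\<^sub>R D (1,0)" .
  qed
  ultimately show "pd1 f x = D (1,0)"
    unfolding pd1_def by (intro vector_derivative_at) (simp add: has_vector_derivative_def)
  have "((\<lambda>y. (fst x, y)) has_derivative (\<lambda>h. (0, h))) (at (snd x))"
    by (rule has_derivative_Pair[OF has_derivative_const has_derivative_ident])
  from has_derivative_compose[OF this] assms
  have "((\<lambda>y. f (fst x, y)) has_derivative (\<lambda>h. D (0, h))) (at (snd x))" by simp
  moreover have "(\<lambda>h. D (0, h)) = (\<lambda>h. h *\<^sub>R D (0,1))"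
  proof
    fix h :: real
    have "D (0, h) = D (h *\<^sub>R (0,1))" by simp
    also have "\<dots> = h *\<^sub>R D (0,1)" by (rule linear_cmul[OF lin])
    finally show "D (0, h) = h *\<^sub>R D (0,1)" .
  qed
  ultimately show "pd2 f x = D (0,1)"
    unfolding pd2_def by (intro vector_derivative_at) (simp add: has_vector_derivative_def)
qed

lemma hasdZ:
  assumes "(h has_field_derivative h') (at (Complex (fst p) (snd p)))"
  shows "((\<lambda>q. h (Complex (fst q) (snd q))) has_derivative (\<lambda>d. h' * Complex (fst d) (snd d))) (at p)"
  using has_derivative_compose[OF bounded_linear_imp_has_derivative[OF bl_Complex] assms[unfolded has_field_derivative_def]]
  by simp

lemma hasdW:
  assumes "(h has_field_derivative h') (at (Complex (fst p) (- snd p)))"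
  shows "((\<lambda>q. h (Complex (fst q) (- snd q))) has_derivative (\<lambda>d. h' * Complex (fst d) (- snd d))) (at p)"
  using has_derivative_compose[OF bounded_linear_imp_has_derivative[OF bl_Complex'] assms[unfolded has_field_derivative_def]]
  by simp

definition duo :: "(complex \<Rightarrow> complex \<Rightarrow> complex) \<Rightarrow> (complex \<Rightarrow> complex \<Rightarrow> complex)
   \<Rightarrow> real \<times> real \<Rightarrow> complex \<times> complex" where
  "duo E1 E2 q = (E1 (Complex (fst q) (snd q)) (Complex (fst q) (- snd q)),
     E2 (Complex (fst q) (snd q)) (Complex (fst q) (- snd q)))"

lemma duo_pd1:
  assumes "\<And>E F. (E,F) \<in> {(E1,F1),(E2,F2)} \<Longrightarrow>
     ((\<lambda>u. E (u + \<i> * of_real (snd q)) (u - \<i> * of_real (snd q))) has_field_derivative F (Complex (fst q) (snd q)) (Complex (fst q) (- snd q))) (at (of_real (fst q)))"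
  shows "pd1 (duo E1 E2) q = duo F1 F2 q"
  by (rule pd1_at) (auto simp: duo_def intro!: has_vector_derivative_Pair vd_s assms)

lemma duo_pd2:
  assumes "\<And>E F. (E,F) \<in> {(E1,F1),(E2,F2)} \<Longrightarrow>
     ((\<lambda>v. E (of_real (fst q) + \<i> * v) (of_real (fst q) - \<i> * v)) has_field_derivative F (Complex (fst q) (snd q)) (Complex (fst q) (- snd q))) (at (of_real (snd q)))"
  shows "pd2 (duo E1 E2) q = duo F1 F2 q"
  by (rule pd2_at) (auto simp: duo_def intro!: has_vector_derivative_Pair vd_t assms)

locale crv =
  fixes C :: "complex \<Rightarrow> complex \<times> complex" and U :: "complex set" and a b :: real
  assumes U_open: "open U" and U_convex: "convex U" and ab: "a < b"
    and I_sub: "of_real ` {a<..<b} \<subseteq> U"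
    and hol1: "(\<lambda>z. fst (C z)) holomorphic_on U"
    and hol2: "(\<lambda>z. snd (C z)) holomorphic_on U"
    and real_on_I: "\<forall>r\<in>{a<..<b}. Im (fst (C (of_real r))) = 0 \<and> Im (snd (C (of_real r))) = 0"
begin

definition "C1 = (\<lambda>z. fst (C z))"
definition "C2 = (\<lambda>z. snd (C z))"
definition "D1 = deriv C1"
definition "D2 = deriv C2"
definition "DD1 = deriv D1"
definition "DD2 = deriv D2"

lemma hC1: "C1 holomorphic_on U" and hC2: "C2 holomorphic_on U"
  using hol1 hol2 by (simp_all add: C1_def C2_def)
lemma hD1: "D1 holomorphic_on U" and hD2: "D2 holomorphic_on U"
  unfolding D1_def D2_def by (simp_all add: holomorphic_deriv hC1 hC2 U_open)
lemma hDD1: "DD1 holomorphic_on U" and hDD2: "DD2 holomorphic_on U"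
  unfolding DD1_def DD2_def by (simp_all add: holomorphic_deriv hD1 hD2 U_open)

lemma dC1: "z \<in> U \<Longrightarrow> (C1 has_field_derivative D1 z) (at z)"
  and dC2: "z \<in> U \<Longrightarrow> (C2 has_field_derivative D2 z) (at z)"
  and dD1: "z \<in> U \<Longrightarrow> (D1 has_field_derivative DD1 z) (at z)"
  and dD2: "z \<in> U \<Longrightarrow> (D2 has_field_derivative DD2 z) (at z)"
  unfolding D1_def D2_def DD1_def DD2_def
  by (auto intro!: holomorphic_derivI U_open hC1 hC2 hD1[unfolded D1_def] hD2[unfolded D2_def])

lemma vderivC: "vderiv C z = (D1 z, D2 z)"
  by (simp add: vderiv_def D1_def D2_def C1_def C2_def)
lemma vderiv2C: "vderiv (vderiv C) z = (DD1 z, DD2 z)"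
proof -
  have "(\<lambda>w. fst (vderiv C w)) = D1" "(\<lambda>w. snd (vderiv C w)) = D2" by (auto simp: vderivC)
  then show ?thesis by (simp add: vderiv_def DD1_def DD2_def)
qed

lemma reflC1: "z \<in> U \<Longrightarrow> cnj z \<in> U \<Longrightarrow> C1 (cnj z) = cnj (C1 z)"
  using reflect[OF U_open U_convex ab I_sub hC1] real_on_I by (simp add: C1_def)
lemma reflC2: "z \<in> U \<Longrightarrow> cnj z \<in> U \<Longrightarrow> C2 (cnj z) = cnj (C2 z)"
  using reflect[OF U_open U_convex ab I_sub hC2] real_on_I by (simp add: C2_def)

definition "K = U \<inter> cnj ` U"
lemma K_open: "open K" unfolding K_def using U_open open_cnj_image by blast
lemma K_convex: "convex K" unfolding K_def using U_convex convex_cnj_image convex_Int by blast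
lemma K_iff: "z \<in> K \<longleftrightarrow> z \<in> U \<and> cnj z \<in> U"
  unfolding K_def by (auto intro: image_eqI[of _ _ "cnj z"])

lemma refl_deriv:
  assumes hf: "f holomorphic_on U" and rf: "\<And>z. z \<in> K \<Longrightarrow> f (cnj z) = cnj (f z)" and z: "z \<in> K"
  shows "deriv f (cnj z) = cnj (deriv f z)"
proof -
  have zc: "cnj z \<in> U" "z \<in> U" using z K_iff by auto
  have "((cnj \<circ> f \<circ> cnj) has_field_derivative cnj (deriv f (cnj z))) (at z)"
    by (rule has_field_derivative_cnj_cnj) (simp add: holomorphic_derivI[OF hf U_open zc(1)])
  then have "(f has_field_derivative cnj (deriv f (cnj z))) (at z)"
  proof (rule has_field_derivative_transform_within_open[OF _ K_open z])
    fix w assume "w \<in> K"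
    then show "(cnj \<circ> f \<circ> cnj) w = f w" using rf[of w] by simp
  qed
  then have "deriv f z = cnj (deriv f (cnj z))"
    using DERIV_unique holomorphic_derivI[OF hf U_open zc(2)] by blast
  then show ?thesis by simp
qed

lemma reflD1: "z \<in> K \<Longrightarrow> D1 (cnj z) = cnj (D1 z)"
  unfolding D1_def by (rule refl_deriv[OF hC1]) (auto simp: K_iff reflC1)
lemma reflD2: "z \<in> K \<Longrightarrow> D2 (cnj z) = cnj (D2 z)"
  unfolding D2_def by (rule refl_deriv[OF hC2]) (auto simp: K_iff reflC2)

definition "gfun = (\<lambda>w. C1 w * D2 w - C2 w * D1 w)"
lemma hgfun: "gfun holomorphic_on U"
  unfolding gfun_def by (intro holomorphic_intros hC1 hC2 hD1 hD2)

definition "G = (SOME G. \<forall>x\<in>U. (G has_field_derivative gfun x) (at x))"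
lemma dG: "z \<in> U \<Longrightarrow> (G has_field_derivative gfun z) (at z)"
proof -
  obtain g where "\<And>x. x \<in> U \<Longrightarrow> (g has_field_derivative gfun x) (at x within U)"
    using holomorphic_convex_primitive'[OF U_convex U_open hgfun] by blast
  then have "\<exists>G. \<forall>x\<in>U. (G has_field_derivative gfun x) (at x)"
    using U_open by (metis at_within_open)
  then have "\<forall>x\<in>U. (G has_field_derivative gfun x) (at x)"
    unfolding G_def by (rule someI_ex)
  then show "z \<in> U \<Longrightarrow> ?thesis" by blast
qed

lemma det2_gfun: "det2 (C w) (vderiv C w) = gfun w"
  by (simp add: det2_def vderivC gfun_def C1_def C2_def)

lemma G_refl:
  assumes z: "z \<in> K" shows "Re (G z - G (cnj z)) = 0"
proof -
  have d0: "((\<lambda>w. (cnj \<circ> G \<circ> cnj) w - G w) has_field_derivative 0) (at w within K)" if w: "w \<in> K" for w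
  proof -
    have wc: "w \<in> U" "cnj w \<in> U" "cnj w \<in> K" using w K_iff by auto
    have "((cnj \<circ> G \<circ> cnj) has_field_derivative cnj (gfun (cnj w))) (at w)"
      by (rule has_field_derivative_cnj_cnj) (simp add: dG wc)
    moreover have "cnj (gfun (cnj w)) = gfun w"
      using wc w by (simp add: gfun_def reflC1 reflC2 reflD1 reflD2)
    ultimately have "((cnj \<circ> G \<circ> cnj) has_field_derivative gfun w) (at w)" by simp
    then have "((\<lambda>w. (cnj \<circ> G \<circ> cnj) w - G w) has_field_derivative gfun w - gfun w) (at w)"
      by (intro DERIV_diff dG wc)
    then show ?thesis by (simp add: has_field_derivative_at_within)
  qed
  have zc: "cnj z \<in> K" using z K_iff by auto
  have "(\<lambda>w. (cnj \<circ> G \<circ> cnj) w - G w) z = (\<lambda>w. (cnj \<circ> G \<circ> cnj) w - G w) (cnj z)"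
    using has_field_derivative_zero_constant[OF K_convex d0] z zc by metis
  then show ?thesis by (simp add: complex_eq_iff)
qed

definition "Fcl z w = \<i>/4 * (G z - G w + C1 z * C2 w - C2 z * C1 w)"

lemma Fm_cl:
  assumes "Complex s t \<in> U" "Complex s (-t) \<in> U"
  shows "Fm C (s,t) = Fcl (Complex s t) (Complex s (-t))"
proof -
  have "fc C (of_real s) (\<i> * of_real t) = 1/4 * (G (Complex s t) - G (Complex s (-t)) + det2 (C (Complex s t)) (C (Complex s (-t))))"
    using fc_closed[OF U_convex U_open hol1 hol2, of G "of_real s" "\<i> * of_real t"] assms
    by (simp add: Complex_plus_minus det2_gfun dG)
  then show ?thesis
    by (simp add: Fm_def Fcl_def det2_def C1_def C2_def)
qed

lemmas C1_chain = chain_gen[OF hC1 U_open, folded D1_def]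
lemmas C2_chain = chain_gen[OF hC2 U_open, folded D2_def]
lemmas D1_chain = chain_gen[OF hD1 U_open, folded DD1_def]
lemmas D2_chain = chain_gen[OF hD2 U_open, folded DD2_def]

lemma G_chain:
  assumes "(f has_field_derivative f') (at x within T)" "f x \<in> U" "Dd = gfun (f x) * f'"
  shows "((\<lambda>u. G (f u)) has_field_derivative Dd) (at x within T)"
  using DERIV_chain2[OF dG[OF assms(2)] assms(1)] assms(3) by simp

definition "hfun z = C1 z * DD2 z - C2 z * DD1 z"

lemma gfun_chain:
  assumes "(f has_field_derivative f') (at x within T)" "f x \<in> U"
    "Dd = hfun (f x) * f'"
  shows "((\<lambda>u. gfun (f u)) has_field_derivative Dd) (at x within T)"
  unfolding gfun_def
  by (rule derivative_eq_intros C1_chain C2_chain D1_chain D2_chain assms | simp add: assms algebra_simps hfun_def)+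

definition "P1E z w = (C1 z + C1 w)/2"
definition "P2E z w = (C2 z + C2 w)/2"
definition "Ps1E z w = (D1 z + D1 w)/2"
definition "Ps2E z w = (D2 z + D2 w)/2"
definition "Pt1E z w = \<i>*(D1 z - D1 w)/2"
definition "Pt2E z w = \<i>*(D2 z - D2 w)/2"
definition "Pss1E z w = (DD1 z + DD1 w)/2"
definition "Pss2E z w = (DD2 z + DD2 w)/2"
definition "Ptt1E z w = -(DD1 z + DD1 w)/2"
definition "Ptt2E z w = -(DD2 z + DD2 w)/2"
definition "Pst1E z w = \<i>*(DD1 z - DD1 w)/2"
definition "Pst2E z w = \<i>*(DD2 z - DD2 w)/2"
definition "Qs3E z w = \<i>/4 * (gfun z - gfun w + D1 z * C2 w + C1 z * D2 w - D2 z * C1 w - C2 z * D1 w)"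
definition "Qt3E z w = -1/4 * (gfun z + gfun w + D1 z * C2 w - C1 z * D2 w - D2 z * C1 w + C2 z * D1 w)"
definition "Qss3E z w = \<i>/4*(hfun z - hfun w + DD1 z*C2 w + 2*D1 z*D2 w + C1 z*DD2 w - DD2 z*C1 w - 2*D2 z*D1 w - C2 z*DD1 w)"
definition "Qtt3E z w = -\<i>/4*(hfun z - hfun w + DD1 z*C2 w - 2*D1 z*D2 w + C1 z*DD2 w - DD2 z*C1 w + 2*D2 z*D1 w - C2 z*DD1 w)"
definition "Qst3E z w = -1/4*(hfun z + hfun w + DD1 z*C2 w - C1 z*DD2 w - DD2 z*C1 w + C2 z*DD1 w)"

lemma dS_P1E:
  assumes "Complex s t \<in> U" "Complex s (-t) \<in> U"
  shows "((\<lambda>u. P1E (u + \<i> * of_real t) (u - \<i> * of_real t)) has_field_derivative Ps1E (Complex s t) (Complex s (-t))) (at (of_real s))"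
  unfolding P1E_def Ps1E_def
  by (rule derivative_eq_intros C1_chain C2_chain D1_chain D2_chain G_chain gfun_chain refl | simp only: Complex_plus_minus assms | simp)+
     ((simp_all add: algebra_simps)?, (simp_all add: field_simps)?)

lemma dS_P2E:
  assumes "Complex s t \<in> U" "Complex s (-t) \<in> U"
  shows "((\<lambda>u. P2E (u + \<i> * of_real t) (u - \<i> * of_real t)) has_field_derivative Ps2E (Complex s t) (Complex s (-t))) (at (of_real s))"
  unfolding P2E_def Ps2E_def
  by (rule derivative_eq_intros C1_chain C2_chain D1_chain D2_chain G_chain gfun_chain refl | simp only: Complex_plus_minus assms | simp)+
     ((simp_all add: algebra_simps)?, (simp_all add: field_simps)?)

lemma dS_Fcl:
  assumes "Complex s t \<in> U" "Complex s (-t) \<in> U"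
  shows "((\<lambda>u. Fcl (u + \<i> * of_real t) (u - \<i> * of_real t)) has_field_derivative Qs3E (Complex s t) (Complex s (-t))) (at (of_real s))"
  unfolding Fcl_def Qs3E_def
  by (rule derivative_eq_intros C1_chain C2_chain D1_chain D2_chain G_chain gfun_chain refl | simp only: Complex_plus_minus assms | simp)+
     ((simp_all add: algebra_simps)?, (simp_all add: field_simps)?)

lemma dS_Ps1E:
  assumes "Complex s t \<in> U" "Complex s (-t) \<in> U"
  shows "((\<lambda>u. Ps1E (u + \<i> * of_real t) (u - \<i> * of_real t)) has_field_derivative Pss1E (Complex s t) (Complex s (-t))) (at (of_real s))"
  unfolding Ps1E_def Pss1E_def
  by (rule derivative_eq_intros C1_chain C2_chain D1_chain D2_chain G_chain gfun_chain refl | simp only: Complex_plus_minus assms | simp)+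
     ((simp_all add: algebra_simps)?, (simp_all add: field_simps)?)

lemma dS_Ps2E:
  assumes "Complex s t \<in> U" "Complex s (-t) \<in> U"
  shows "((\<lambda>u. Ps2E (u + \<i> * of_real t) (u - \<i> * of_real t)) has_field_derivative Pss2E (Complex s t) (Complex s (-t))) (at (of_real s))"
  unfolding Ps2E_def Pss2E_def
  by (rule derivative_eq_intros C1_chain C2_chain D1_chain D2_chain G_chain gfun_chain refl | simp only: Complex_plus_minus assms | simp)+
     ((simp_all add: algebra_simps)?, (simp_all add: field_simps)?)

lemma dS_Qs3E:
  assumes "Complex s t \<in> U" "Complex s (-t) \<in> U"
  shows "((\<lambda>u. Qs3E (u + \<i> * of_real t) (u - \<i> * of_real t)) has_field_derivative Qss3E (Complex s t) (Complex s (-t))) (at (of_real s))"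
  unfolding Qs3E_def Qss3E_def
  by (rule derivative_eq_intros C1_chain C2_chain D1_chain D2_chain G_chain gfun_chain refl | simp only: Complex_plus_minus assms | simp)+
     ((simp_all add: algebra_simps)?, (simp_all add: field_simps)?)

lemma dT_P1E_Pt1E:
  assumes "Complex s t \<in> U" "Complex s (-t) \<in> U"
  shows "((\<lambda>v. P1E (of_real s + \<i> * v) (of_real s - \<i> * v)) has_field_derivative Pt1E (Complex s t) (Complex s (-t))) (at (of_real t))"
  unfolding P1E_def Pt1E_def
  by (rule derivative_eq_intros C1_chain C2_chain D1_chain D2_chain G_chain gfun_chain refl | simp only: Complex_plus_minus assms | simp)+
     ((simp_all add: algebra_simps)?, (simp_all add: field_simps)?)

lemma dT_P2E_Pt2E:
  assumes "Complex s t \<in> U" "Complex s (-t) \<in> U"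
  shows "((\<lambda>v. P2E (of_real s + \<i> * v) (of_real s - \<i> * v)) has_field_derivative Pt2E (Complex s t) (Complex s (-t))) (at (of_real t))"
  unfolding P2E_def Pt2E_def
  by (rule derivative_eq_intros C1_chain C2_chain D1_chain D2_chain G_chain gfun_chain refl | simp only: Complex_plus_minus assms | simp)+
     ((simp_all add: algebra_simps)?, (simp_all add: field_simps)?)

lemma dT_Fcl_Qt3E:
  assumes "Complex s t \<in> U" "Complex s (-t) \<in> U"
  shows "((\<lambda>v. Fcl (of_real s + \<i> * v) (of_real s - \<i> * v)) has_field_derivative Qt3E (Complex s t) (Complex s (-t))) (at (of_real t))"
  unfolding Fcl_def Qt3E_def
  by (rule derivative_eq_intros C1_chain C2_chain D1_chain D2_chain G_chain gfun_chain refl | simp only: Complex_plus_minus assms | simp)+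
     ((simp_all add: algebra_simps)?, (simp_all add: field_simps)?)

lemma dT_Pt1E_Ptt1E:
  assumes "Complex s t \<in> U" "Complex s (-t) \<in> U"
  shows "((\<lambda>v. Pt1E (of_real s + \<i> * v) (of_real s - \<i> * v)) has_field_derivative Ptt1E (Complex s t) (Complex s (-t))) (at (of_real t))"
  unfolding Pt1E_def Ptt1E_def
  by (rule derivative_eq_intros C1_chain C2_chain D1_chain D2_chain G_chain gfun_chain refl | simp only: Complex_plus_minus assms | simp)+
     ((simp_all add: algebra_simps)?, (simp_all add: field_simps)?)

lemma dT_Pt2E_Ptt2E:
  assumes "Complex s t \<in> U" "Complex s (-t) \<in> U"
  shows "((\<lambda>v. Pt2E (of_real s + \<i> * v) (of_real s - \<i> * v)) has_field_derivative Ptt2E (Complex s t) (Complex s (-t))) (at (of_real t))"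
  unfolding Pt2E_def Ptt2E_def
  by (rule derivative_eq_intros C1_chain C2_chain D1_chain D2_chain G_chain gfun_chain refl | simp only: Complex_plus_minus assms | simp)+
     ((simp_all add: algebra_simps)?, (simp_all add: field_simps)?)

lemma dT_Qt3E_Qtt3E:
  assumes "Complex s t \<in> U" "Complex s (-t) \<in> U"
  shows "((\<lambda>v. Qt3E (of_real s + \<i> * v) (of_real s - \<i> * v)) has_field_derivative Qtt3E (Complex s t) (Complex s (-t))) (at (of_real t))"
  unfolding Qt3E_def Qtt3E_def
  by (rule derivative_eq_intros C1_chain C2_chain D1_chain D2_chain G_chain gfun_chain refl | simp only: Complex_plus_minus assms | simp)+
     ((simp_all add: algebra_simps)?, (simp_all add: field_simps)?)

lemma dT_Ps1E_Pst1E: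
  assumes "Complex s t \<in> U" "Complex s (-t) \<in> U"
  shows "((\<lambda>v. Ps1E (of_real s + \<i> * v) (of_real s - \<i> * v)) has_field_derivative Pst1E (Complex s t) (Complex s (-t))) (at (of_real t))"
  unfolding Ps1E_def Pst1E_def
  by (rule derivative_eq_intros C1_chain C2_chain D1_chain D2_chain G_chain gfun_chain refl | simp only: Complex_plus_minus assms | simp)+
     ((simp_all add: algebra_simps)?, (simp_all add: field_simps)?)

lemma dT_Ps2E_Pst2E:
  assumes "Complex s t \<in> U" "Complex s (-t) \<in> U"
  shows "((\<lambda>v. Ps2E (of_real s + \<i> * v) (of_real s - \<i> * v)) has_field_derivative Pst2E (Complex s t) (Complex s (-t))) (at (of_real t))"
  unfolding Ps2E_def Pst2E_def
  by (rule derivative_eq_intros C1_chain C2_chain D1_chain D2_chain G_chain gfun_chain refl | simp only: Complex_plus_minus assms | simp)+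
     ((simp_all add: algebra_simps)?, (simp_all add: field_simps)?)

lemma dT_Qs3E_Qst3E:
  assumes "Complex s t \<in> U" "Complex s (-t) \<in> U"
  shows "((\<lambda>v. Qs3E (of_real s + \<i> * v) (of_real s - \<i> * v)) has_field_derivative Qst3E (Complex s t) (Complex s (-t))) (at (of_real t))"
  unfolding Qs3E_def Qst3E_def
  by (rule derivative_eq_intros C1_chain C2_chain D1_chain D2_chain G_chain gfun_chain refl | simp only: Complex_plus_minus assms | simp)+
     ((simp_all add: algebra_simps)?, (simp_all add: field_simps)?)

definition "Om = {q. Complex (fst q) (snd q) \<in> U \<and> Complex (fst q) (- snd q) \<in> U}"

lemma O_open: "open Om"
proof -
  have "Om = (\<lambda>q. of_real (fst q) + \<i> * of_real (snd q)) -` U \<inter> (\<lambda>q. of_real (fst q) - \<i> * of_real (snd q)) -` U"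
    by (auto simp: Om_def Complex_plus_minus)
  moreover have "open ((\<lambda>q. of_real (fst q) + \<i> * of_real (snd q)) -` U)" "open ((\<lambda>q. of_real (fst q) - \<i> * of_real (snd q)) -` U)"
    by (auto intro!: open_vimage U_open continuous_intros)
  ultimately show ?thesis by auto
qed

lemma O_mem: "q \<in> Om \<Longrightarrow> Complex (fst q) (snd q) \<in> U" "q \<in> Om \<Longrightarrow> Complex (fst q) (- snd q) \<in> U"
  by (auto simp: Om_def)

lemma Qm_eq: "p \<in> Om \<Longrightarrow> Qm C p = trip P1E P2E Fcl p"
  using Fm_cl[of "fst p" "snd p"]
  by (cases p) (auto simp: Qm_def Pm_def trip_def P1E_def P2E_def C1_def C2_def Om_def scaleR_conv_of_real algebra_simps)

lemma pd1_Qm: "p \<in> Om \<Longrightarrow> pd1 (Qm C) p = trip Ps1E Ps2E Qs3E p"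
proof -
  assume p: "p \<in> Om"
  have "pd1 (Qm C) p = pd1 (trip P1E P2E Fcl) p"
    by (rule pd1_cong[OF O_open p]) (simp add: Qm_eq)
  also have "\<dots> = trip Ps1E Ps2E Qs3E p"
    by (rule trip_pd1) (use dS_P1E dS_P2E dS_Fcl O_mem[OF p] in auto)
  finally show ?thesis .
qed

lemma pd2_Qm: "p \<in> Om \<Longrightarrow> pd2 (Qm C) p = trip Pt1E Pt2E Qt3E p"
proof -
  assume p: "p \<in> Om"
  have "pd2 (Qm C) p = pd2 (trip P1E P2E Fcl) p"
    by (rule pd2_cong[OF O_open p]) (simp add: Qm_eq)
  also have "\<dots> = trip Pt1E Pt2E Qt3E p"
    by (rule trip_pd2) (use dT_P1E_Pt1E dT_P2E_Pt2E dT_Fcl_Qt3E O_mem[OF p] in auto)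
  finally show ?thesis .
qed

lemma pd11_Qm: "p \<in> Om \<Longrightarrow> pd1 (pd1 (Qm C)) p = trip Pss1E Pss2E Qss3E p"
proof -
  assume p: "p \<in> Om"
  have "pd1 (pd1 (Qm C)) p = pd1 (trip Ps1E Ps2E Qs3E) p"
    by (rule pd1_cong[OF O_open p]) (simp add: pd1_Qm)
  also have "\<dots> = trip Pss1E Pss2E Qss3E p"
    by (rule trip_pd1) (use dS_Ps1E dS_Ps2E dS_Qs3E O_mem[OF p] in auto)
  finally show ?thesis .
qed

lemma pd22_Qm: "p \<in> Om \<Longrightarrow> pd2 (pd2 (Qm C)) p = trip Ptt1E Ptt2E Qtt3E p"
proof -
  assume p: "p \<in> Om"
  have "pd2 (pd2 (Qm C)) p = pd2 (trip Pt1E Pt2E Qt3E) p"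
    by (rule pd2_cong[OF O_open p]) (simp add: pd2_Qm)
  also have "\<dots> = trip Ptt1E Ptt2E Qtt3E p"
    by (rule trip_pd2) (use dT_Pt1E_Ptt1E dT_Pt2E_Ptt2E dT_Qt3E_Qtt3E O_mem[OF p] in auto)
  finally show ?thesis .
qed

lemma pd21_Qm: "p \<in> Om \<Longrightarrow> pd2 (pd1 (Qm C)) p = trip Pst1E Pst2E Qst3E p"
proof -
  assume p: "p \<in> Om"
  have "pd2 (pd1 (Qm C)) p = pd2 (trip Ps1E Ps2E Qs3E) p"
    by (rule pd2_cong[OF O_open p]) (simp add: pd1_Qm)
  also have "\<dots> = trip Pst1E Pst2E Qst3E p"
    by (rule trip_pd2) (use dT_Ps1E_Pst1E dT_Ps2E_Pst2E dT_Qs3E_Qst3E O_mem[OF p] in auto)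
  finally show ?thesis .
qed

lemma iso_Qm:
  assumes p: "p \<in> Om"
  shows "det3 (pd1 (Qm C) p) (pd2 (Qm C) p) (pd1 (pd1 (Qm C)) p) = det3 (pd1 (Qm C) p) (pd2 (Qm C) p) (pd2 (pd2 (Qm C)) p)"
    "det3 (pd1 (Qm C) p) (pd2 (Qm C) p) (pd2 (pd1 (Qm C)) p) = 0"
  unfolding pd1_Qm[OF p] pd2_Qm[OF p] pd11_Qm[OF p] pd22_Qm[OF p] pd21_Qm[OF p] trip_def
    Ps1E_def Ps2E_def Qs3E_def Pt1E_def Pt2E_def Qt3E_def Pss1E_def Pss2E_def Qss3E_def
    Ptt1E_def Ptt2E_def Qtt3E_def Pst1E_def Pst2E_def Qst3E_def
  by (rule iso_alg; simp add: gfun_def hfun_def)+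

lemma hG: "G holomorphic_on U"
  using dG U_open by (auto simp: holomorphic_on_def field_differentiable_def intro: has_field_derivative_at_within)

lemmas hols = hC1 hC2 hD1 hD2 hG hgfun

lemma trip_diff:
  assumes p: "p \<in> Om"
  shows "trip P1E P2E Fcl differentiable (at p)" "trip Ps1E Ps2E Qs3E differentiable (at p)"
    "trip Pt1E Pt2E Qt3E differentiable (at p)"
  using O_mem[OF p]
  unfolding trip_def P1E_def P2E_def Fcl_def Ps1E_def Ps2E_def Qs3E_def Pt1E_def Pt2E_def Qt3E_def
  by (intro derivative_intros hol_diffZ[OF _ U_open] hol_diffW[OF _ U_open] hols; simp)+

lemma Qm_diffs:
  assumes p: "p \<in> Om"
  shows "Qm C differentiable (at p)" "pd1 (Qm C) differentiable (at p)" "pd2 (Qm C) differentiable (at p)"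
  using differentiable_cong_open[OF O_open p Qm_eq trip_diff(1)[OF p]]
    differentiable_cong_open[OF O_open p pd1_Qm trip_diff(2)[OF p]]
    differentiable_cong_open[OF O_open p pd2_Qm trip_diff(3)[OF p]] by auto

lemma sdom_mem: "(s,t) \<in> sdom S \<Longrightarrow> Complex s t \<in> S \<and> Complex s (-t) \<in> S"
  unfolding sdom_def by auto

lemma real_parts:
  assumes z: "Complex s t \<in> U" "Complex s (-t) \<in> U"
  shows "Im (fst (Pm C (s,t))) = 0" "Im (snd (Pm C (s,t))) = 0" "Im (Fm C (s,t)) = 0"
proof -
  let ?z = "Complex s t"
  have cz: "cnj ?z = Complex s (-t)" by (simp add: complex_eq_iff)
  have zK: "?z \<in> U" "cnj ?z \<in> U" "?z \<in> K" using z cz K_iff by auto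
  have r1: "C1 (Complex s (-t)) = cnj (C1 ?z)" and r2: "C2 (Complex s (-t)) = cnj (C2 ?z)"
    using reflC1[OF zK(1,2)] reflC2[OF zK(1,2)] cz by auto
  show "Im (fst (Pm C (s,t))) = 0" "Im (snd (Pm C (s,t))) = 0"
    using r1 r2 by (simp_all add: Pm_def C1_def C2_def scaleR_conv_of_real)
  have g: "Re (G ?z - G (Complex s (-t))) = 0" using G_refl[OF zK(3)] cz by simp
  show "Im (Fm C (s,t)) = 0"
    using g unfolding Fm_cl[OF z] Fcl_def r1 r2 by (simp add: algebra_simps)
qed

lemma Pm_duo: "Pm C = duo P1E P2E"
  by (rule ext) (simp add: Pm_def duo_def P1E_def P2E_def C1_def C2_def scaleR_prod_def scaleR_conv_of_real algebra_simps)

lemma pc_parts: "fst (pc C u v) = (C1 (u+v) + C1 (u-v))/2" "snd (pc C u v) = (C2 (u+v) + C2 (u-v))/2"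
  by (simp_all add: pc_def C1_def C2_def scaleR_prod_def scaleR_conv_of_real algebra_simps)
lemma Pzw_parts: "fst (Pzw C u v) = (C1 u + C1 v)/2" "snd (Pzw C u v) = (C2 u + C2 v)/2"
  by (simp_all add: Pzw_def C1_def C2_def scaleR_prod_def scaleR_conv_of_real algebra_simps)

lemma pd1_Pm: "p \<in> Om \<Longrightarrow> pd1 (Pm C) p = duo Ps1E Ps2E p"
  unfolding Pm_duo by (rule duo_pd1) (use dS_P1E dS_P2E O_mem in auto)
lemma pd2_Pm: "p \<in> Om \<Longrightarrow> pd2 (Pm C) p = duo Pt1E Pt2E p"
  unfolding Pm_duo by (rule duo_pd2) (use dT_P1E_Pt1E dT_P2E_Pt2E O_mem in auto)

lemma cpd1_pc:
  assumes "s + \<tau> \<in> U" "s - \<tau> \<in> U"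
  shows "cpd1 (pc C) s \<tau> = ((D1 (s+\<tau>) + D1 (s-\<tau>))/2, (D2 (s+\<tau>) + D2 (s-\<tau>))/2)"
proof -
  have "((\<lambda>u. fst (pc C u \<tau>)) has_field_derivative (D1 (s+\<tau>) + D1 (s-\<tau>))/2) (at s)"
    unfolding pc_parts
    by (rule derivative_eq_intros C1_chain refl | simp add: assms)+
  moreover have "((\<lambda>u. snd (pc C u \<tau>)) has_field_derivative (D2 (s+\<tau>) + D2 (s-\<tau>))/2) (at s)"
    unfolding pc_parts
    by (rule derivative_eq_intros C2_chain refl | simp add: assms)+
  ultimately show ?thesis unfolding cpd1_def by (simp add: DERIV_imp_deriv)
qed

lemma cpd2_pc:
  assumes "s + \<tau> \<in> U" "s - \<tau> \<in> U"
  shows "cpd2 (pc C) s \<tau> = ((D1 (s+\<tau>) - D1 (s-\<tau>))/2, (D2 (s+\<tau>) - D2 (s-\<tau>))/2)"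
proof -
  have "((\<lambda>u. fst (pc C s u)) has_field_derivative (D1 (s+\<tau>) - D1 (s-\<tau>))/2) (at \<tau>)"
    unfolding pc_parts
    by (rule derivative_eq_intros C1_chain refl | simp add: assms)+
  moreover have "((\<lambda>u. snd (pc C s u)) has_field_derivative (D2 (s+\<tau>) - D2 (s-\<tau>))/2) (at \<tau>)"
    unfolding pc_parts
    by (rule derivative_eq_intros C2_chain refl | simp add: assms)+
  ultimately show ?thesis unfolding cpd2_def by (simp add: DERIV_imp_deriv)
qed

lemma Omega_omegac:
  assumes p: "p \<in> Om"
  shows "Omega C p = - \<i> * omegac C (of_real (fst p)) (\<i> * of_real (snd p))"
  using O_mem[OF p]
  unfolding Omega_def omegac_def pd1_Pm[OF p] pd2_Pm[OF p]
  by (simp add: cpd1_pc cpd2_pc Complex_plus_minus duo_def Ps1E_def Ps2E_def Pt1E_def Pt2E_def det2_def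
      field_simps)

lemma cpd1_Pzw: "x \<in> U \<Longrightarrow> cpd1 (Pzw C) x y = (D1 x / 2, D2 x / 2)"
proof -
  assume x: "x \<in> U"
  have "((\<lambda>u. fst (Pzw C u y)) has_field_derivative D1 x / 2) (at x)"
    unfolding Pzw_parts
    by (rule derivative_eq_intros C1_chain refl | simp add: x)+
  moreover have "((\<lambda>u. snd (Pzw C u y)) has_field_derivative D2 x / 2) (at x)"
    unfolding Pzw_parts
    by (rule derivative_eq_intros C2_chain refl | simp add: x)+
  ultimately show ?thesis unfolding cpd1_def by (simp add: DERIV_imp_deriv)
qed

lemma cpd2_Pzw: "y \<in> U \<Longrightarrow> cpd2 (Pzw C) x y = (D1 y / 2, D2 y / 2)"
proof -
  assume y: "y \<in> U"
  have "((\<lambda>u. fst (Pzw C x u)) has_field_derivative D1 y / 2) (at y)"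
    unfolding Pzw_parts
    by (rule derivative_eq_intros C1_chain refl | simp add: y)+
  moreover have "((\<lambda>u. snd (Pzw C x u)) has_field_derivative D2 y / 2) (at y)"
    unfolding Pzw_parts
    by (rule derivative_eq_intros C2_chain refl | simp add: y)+
  ultimately show ?thesis unfolding cpd2_def by (simp add: DERIV_imp_deriv)
qed

lemma ev_U: "z \<in> U \<Longrightarrow> eventually (\<lambda>u. u \<in> U) (nhds z)"
  using eventually_nhds_in_open[OF U_open] by blast

lemma cpd11_Pzw: "z \<in> U \<Longrightarrow> cpd1 (cpd1 (Pzw C)) z w = (DD1 z / 2, DD2 z / 2)"
proof -
  assume z: "z \<in> U"
  have e1: "deriv (\<lambda>u. fst (cpd1 (Pzw C) u w)) z = deriv (\<lambda>u. D1 u / 2) z"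
    by (rule deriv_cong_ev[OF eventually_mono[OF ev_U[OF z]]]) (auto simp: cpd1_Pzw)
  have e2: "deriv (\<lambda>u. snd (cpd1 (Pzw C) u w)) z = deriv (\<lambda>u. D2 u / 2) z"
    by (rule deriv_cong_ev[OF eventually_mono[OF ev_U[OF z]]]) (auto simp: cpd1_Pzw)
  have "((\<lambda>u. D1 u / 2) has_field_derivative DD1 z / 2) (at z)"
    by (rule derivative_eq_intros D1_chain refl | simp add: z)+
  moreover have "((\<lambda>u. D2 u / 2) has_field_derivative DD2 z / 2) (at z)"
    by (rule derivative_eq_intros D2_chain refl | simp add: z)+
  ultimately show ?thesis unfolding cpd1_def[of "cpd1 (Pzw C)"] e1 e2 by (simp add: DERIV_imp_deriv)
qed

lemma cpd22_Pzw: "w \<in> U \<Longrightarrow> cpd2 (cpd2 (Pzw C)) z w = (DD1 w / 2, DD2 w / 2)"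
proof -
  assume w: "w \<in> U"
  have e1: "deriv (\<lambda>u. fst (cpd2 (Pzw C) z u)) w = deriv (\<lambda>u. D1 u / 2) w"
    by (rule deriv_cong_ev[OF eventually_mono[OF ev_U[OF w]]]) (auto simp: cpd2_Pzw)
  have e2: "deriv (\<lambda>u. snd (cpd2 (Pzw C) z u)) w = deriv (\<lambda>u. D2 u / 2) w"
    by (rule deriv_cong_ev[OF eventually_mono[OF ev_U[OF w]]]) (auto simp: cpd2_Pzw)
  have "((\<lambda>u. D1 u / 2) has_field_derivative DD1 w / 2) (at w)"
    by (rule derivative_eq_intros D1_chain refl | simp add: w)+
  moreover have "((\<lambda>u. D2 u / 2) has_field_derivative DD2 w / 2) (at w)"
    by (rule derivative_eq_intros D2_chain refl | simp add: w)+
  ultimately show ?thesis unfolding cpd2_def[of "cpd2 (Pzw C)"] e1 e2 by (simp add: DERIV_imp_deriv)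
qed

lemma Astr_eq:
  assumes "Complex s t \<in> U"
  shows "Astr C (s,t) = \<i> / 4 * det2 (vderiv C (Complex s t)) (vderiv (vderiv C) (Complex s t))"
  using assms by (simp add: Astr_def Let_def cnj_Complex cpd1_Pzw cpd11_Pzw vderivC vderiv2C det2_def field_simps)

lemma Bstr_eq:
  assumes "Complex s (-t) \<in> U"
  shows "Bstr C (s,t) = - \<i> / 4 * det2 (vderiv C (Complex s (-t))) (vderiv (vderiv C) (Complex s (-t)))"
  using assms by (simp add: Bstr_def Let_def cnj_Complex cpd2_Pzw cpd22_Pzw vderivC vderiv2C det2_def field_simps)

lemma reparam:
  fixes \<psi> :: "complex \<Rightarrow> complex"
  assumes V: "open V" "convex V" "a' < b'" "of_real ` {a'<..<b'} \<subseteq> V"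
    and hp: "\<psi> holomorphic_on V" and pV: "\<psi> ` V \<subseteq> U"
    and pr: "\<forall>r\<in>{a'<..<b'}. Im (\<psi> (of_real r)) = 0"
    and z: "Complex s t \<in> V" "Complex s (-t) \<in> V"
  shows "Fm (C \<circ> \<psi>) (s, t) = Fm C (Re (\<psi> (Complex s t)), Im (\<psi> (Complex s t)))"
    "Pm (C \<circ> \<psi>) (s, t) = Pm C (Re (\<psi> (Complex s t)), Im (\<psi> (Complex s t)))"
    "Qm (C \<circ> \<psi>) (s, t) = Qm C (Re (\<psi> (Complex s t)), Im (\<psi> (Complex s t)))"
proof -
  let ?z = "Complex s t" and ?w = "Complex s (-t)"
  have cz: "cnj ?z = ?w" by (simp add: cnj_Complex)
  have pw: "\<psi> ?w = cnj (\<psi> ?z)"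
    using reflect[OF V(1,2,3,4) hp pr z(1)] z(2) cz by simp
  have pU: "\<psi> ?z \<in> U" "\<psi> ?w \<in> U" using pV z by auto
  have e1: "Complex (Re (\<psi> ?z)) (Im (\<psi> ?z)) = \<psi> ?z" by simp
  have e2: "Complex (Re (\<psi> ?z)) (- Im (\<psi> ?z)) = \<psi> ?w" by (simp add: pw complex_eq_iff)
  show P: "Pm (C \<circ> \<psi>) (s, t) = Pm C (Re (\<psi> ?z), Im (\<psi> ?z))"
    by (simp add: Pm_def e2)
  have h1: "(\<lambda>z. fst ((C \<circ> \<psi>) z)) holomorphic_on V"
    using holomorphic_on_compose_gen[OF hp hC1 pV] by (simp add: C1_def o_def)
  have h2: "(\<lambda>z. snd ((C \<circ> \<psi>) z)) holomorphic_on V"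
    using holomorphic_on_compose_gen[OF hp hC2 pV] by (simp add: C2_def o_def)
  have dGp: "((G \<circ> \<psi>) has_field_derivative det2 ((C \<circ> \<psi>) w) (vderiv (C \<circ> \<psi>) w)) (at w)"
    if w: "w \<in> V" for w
  proof -
    have dp: "(\<psi> has_field_derivative deriv \<psi> w) (at w)" using holomorphic_derivI[OF hp V(1) w] .
    have pwU: "\<psi> w \<in> U" using pV w by auto
    have d1: "((\<lambda>u. C1 (\<psi> u)) has_field_derivative D1 (\<psi> w) * deriv \<psi> w) (at w)"
      by (rule C1_chain[OF dp pwU refl])
    have d2: "((\<lambda>u. C2 (\<psi> u)) has_field_derivative D2 (\<psi> w) * deriv \<psi> w) (at w)"
      by (rule C2_chain[OF dp pwU refl])
    have vd: "vderiv (C \<circ> \<psi>) w = (D1 (\<psi> w) * deriv \<psi> w, D2 (\<psi> w) * deriv \<psi> w)"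
      using DERIV_imp_deriv[OF d1] DERIV_imp_deriv[OF d2] by (simp add: vderiv_def C1_def C2_def)
    have "((\<lambda>u. G (\<psi> u)) has_field_derivative gfun (\<psi> w) * deriv \<psi> w) (at w)"
      by (rule G_chain[OF dp pwU refl])
    moreover have "gfun (\<psi> w) * deriv \<psi> w = det2 ((C \<circ> \<psi>) w) (vderiv (C \<circ> \<psi>) w)"
      by (simp add: vd gfun_def det2_def C1_def C2_def algebra_simps)
    ultimately show ?thesis by (simp add: o_def)
  qed
  have fc: "fc (C \<circ> \<psi>) (of_real s) (\<i> * of_real t) =
      1/4 * ((G \<circ> \<psi>) ?z - (G \<circ> \<psi>) ?w + det2 ((C \<circ> \<psi>) ?z) ((C \<circ> \<psi>) ?w))"
    using fc_closed[OF V(2,1) h1 h2 dGp, of "of_real s" "\<i> * of_real t"] z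
    by (simp add: Complex_plus_minus o_def)
  show F: "Fm (C \<circ> \<psi>) (s, t) = Fm C (Re (\<psi> ?z), Im (\<psi> ?z))"
    using Fm_cl[of "Re (\<psi> ?z)" "Im (\<psi> ?z)"] pU unfolding e1 e2
    by (simp add: Fm_def fc Fcl_def det2_def C1_def C2_def algebra_simps)
  show "Qm (C \<circ> \<psi>) (s, t) = Qm C (Re (\<psi> ?z), Im (\<psi> ?z))"
    using P F by (simp add: Qm_def)
qed

lemma lim_Z:
  assumes "h holomorphic_on U" "Complex a0 b0 \<in> U"
  shows "((\<lambda>q. h (Complex (fst q) (snd q))) \<longlongrightarrow> h (Complex a0 b0)) (at (a0,b0) within S)"
proof -
  have "(\<lambda>q. h (Complex (fst q) (snd q))) differentiable (at (a0,b0) within S)"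
    using hol_diffZ[OF assms(1) U_open, of "(a0,b0)"] assms(2) by (simp add: differentiable_at_withinI)
  from differentiable_imp_continuous_within[OF this] show ?thesis
    by (simp add: continuous_within)
qed

lemma lim_W:
  assumes "h holomorphic_on U" "Complex a0 (-b0) \<in> U"
  shows "((\<lambda>q. h (Complex (fst q) (- snd q))) \<longlongrightarrow> h (Complex a0 (-b0))) (at (a0,b0) within S)"
proof -
  have "(\<lambda>q. h (Complex (fst q) (- snd q))) differentiable (at (a0,b0) within S)"
    using hol_diffW[OF assms(1) U_open, of "(a0,b0)"] assms(2) by (simp add: differentiable_at_withinI)
  from differentiable_imp_continuous_within[OF this] show ?thesis
    by (simp add: continuous_within)
qed

lemma dist_Z: "dist (Complex s t) (Complex s0 0) = dist (s,t) (s0,0)"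
  "dist (Complex s (-t)) (Complex s0 0) = dist (s,t) (s0,0)"
proof -
  have "Complex s t - Complex s0 0 = Complex (s - s0) t" "Complex s (-t) - Complex s0 0 = Complex (s - s0) (-t)"
    by (simp_all add: complex_eq_iff)
  then show "dist (Complex s t) (Complex s0 0) = dist (s,t) (s0,0)"
    "dist (Complex s (-t)) (Complex s0 0) = dist (s,t) (s0,0)"
    unfolding dist_Pair_Pair by (simp_all add: dist_norm complex_norm dist_real_def)
qed

lemma dq_tendsto:
  assumes hf: "f holomorphic_on U" and x0: "Complex s0 0 \<in> U"
  shows "((\<lambda>q. (f (Complex (fst q) (snd q)) - f (Complex (fst q) (- snd q))) /
           (Complex (fst q) (snd q) - Complex (fst q) (- snd q))) \<longlongrightarrow> deriv f (Complex s0 0))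
         (at (s0, 0) within {q. snd q > 0})"
  unfolding tendsto_iff
proof (intro allI impI)
  fix e :: real assume e: "e > 0"
  let ?x0 = "Complex s0 0" and ?c = "deriv f (Complex s0 0)"
  have hd: "deriv f holomorphic_on U" using holomorphic_deriv[OF hf U_open] .
  have ic: "isCont (deriv f) ?x0"
    using holomorphic_on_imp_continuous_on[OF hd] continuous_on_eq_continuous_at[OF U_open] x0 by blast
  obtain r1 where r1: "r1 > 0" "\<And>u. dist u ?x0 < r1 \<Longrightarrow> dist (deriv f u) ?c < e/2"
    using ic e unfolding continuous_at_eps_delta by (metis half_gt_zero)
  obtain r2 where r2: "r2 > 0" "ball ?x0 r2 \<subseteq> U" using U_open x0 openE by blast
  define r where "r = min r1 r2"
  have r: "r > 0" "r \<le> r1" "r \<le> r2" using r1 r2 by (auto simp: r_def)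
  have bound: "norm ((f z - ?c * z) - (f w - ?c * w)) \<le> e/2 * norm (z - w)"
    if z: "z \<in> ball ?x0 r" and w: "w \<in> ball ?x0 r" for z w
  proof (rule field_differentiable_bound[OF convex_ball _ _ z w])
    fix u assume u: "u \<in> ball ?x0 r"
    then have uU: "u \<in> U" using r r2 by auto
    have "(f has_field_derivative deriv f u) (at u within ball ?x0 r)"
      by (rule holomorphic_derivI[OF hf U_open uU])
    then show "((\<lambda>u. f u - ?c * u) has_field_derivative deriv f u - ?c) (at u within ball ?x0 r)"
      by (intro derivative_eq_intros) auto
    have "dist u ?x0 < r1" using u r by (simp add: dist_commute)
    from r1(2)[OF this] show "norm (deriv f u - ?c) \<le> e/2" by (simp add: dist_norm)
  qed
  show "\<forall>\<^sub>F q in at (s0, 0) within {q. 0 < snd q}.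
     dist ((f (Complex (fst q) (snd q)) - f (Complex (fst q) (- snd q))) /
           (Complex (fst q) (snd q) - Complex (fst q) (- snd q))) ?c < e"
    unfolding eventually_at
  proof (intro exI[of _ r] conjI ballI impI)
    show "r > 0" using r by simp
    fix q :: "real \<times> real" assume q: "q \<in> {q. 0 < snd q}" and qd: "q \<noteq> (s0, 0) \<and> dist q (s0, 0) < r"
    obtain s t where st: "q = (s,t)" by (cases q)
    let ?z = "Complex s t" and ?w = "Complex s (-t)"
    have t: "t > 0" using q st by simp
    have zb: "?z \<in> ball ?x0 r" "?w \<in> ball ?x0 r"
      using qd st dist_Z[of s t s0] by (auto simp: dist_commute)
    have nz: "?z - ?w \<noteq> 0" using t by (simp add: complex_eq_iff)
    have "(f ?z - f ?w) / (?z - ?w) - ?c = ((f ?z - ?c * ?z) - (f ?w - ?c * ?w)) / (?z - ?w)"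
      using nz by (simp add: field_simps)
    then have "dist ((f ?z - f ?w) / (?z - ?w)) ?c = norm ((f ?z - ?c * ?z) - (f ?w - ?c * ?w)) / norm (?z - ?w)"
      by (simp add: dist_norm norm_divide)
    also have "\<dots> \<le> e/2" using bound[OF zb] nz by (simp add: divide_le_eq)
    also have "\<dots> < e" using e by simp
    finally show "dist ((f (Complex (fst q) (snd q)) - f (Complex (fst q) (- snd q))) /
           (Complex (fst q) (snd q) - Complex (fst q) (- snd q))) ?c < e" using st by simp
  qed
qed

lemma Omega_Om:
  assumes p: "p \<in> Om"
  shows "Omega C p = \<i>/4 * det2 (D1 (Complex (fst p) (snd p)), D2 (Complex (fst p) (snd p)))
                                 (D1 (Complex (fst p) (- snd p)), D2 (Complex (fst p) (- snd p)))"
  unfolding Omega_def pd1_Pm[OF p] pd2_Pm[OF p]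
  by (simp add: duo_def Ps1E_def Ps2E_def Pt1E_def Pt2E_def det2_def field_simps)

lemma pick_nonzero:
  assumes sc: "\<forall>r\<in>{a<..<b}. Re (det2 (vderiv C (of_real r)) (vderiv (vderiv C) (of_real r))) > 0"
    and s0: "s0 \<in> {a<..<b}"
  shows "\<exists>\<epsilon>>0. \<forall>s t. \<bar>s - s0\<bar> < \<epsilon> \<and> 0 < t \<and> t < \<epsilon> \<longrightarrow>
           (s, t) \<in> sdom U \<and> Omega C (s, t) \<noteq> 0 \<and> Jpick C (s, t) \<noteq> 0"
proof -
  let ?x0 = "Complex s0 0"
  have ofr: "complex_of_real s0 = ?x0" by (simp add: complex_eq_iff)
  have x0: "?x0 \<in> U" using I_sub s0 ofr by force
  define \<kappa> where "\<kappa> = det2 (D1 ?x0, D2 ?x0) (DD1 ?x0, DD2 ?x0)"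
  have "Re (det2 (vderiv C (of_real s0)) (vderiv (vderiv C) (of_real s0))) > 0" using sc s0 by blast
  then have "Re \<kappa> > 0" unfolding ofr by (simp add: \<kappa>_def vderivC vderiv2C)
  then have k0: "\<kappa> \<noteq> 0" by auto
  let ?F = "at (s0, 0) within {q::real\<times>real. snd q > 0}"
  define Z where "Z q = Complex (fst q) (snd q)" for q :: "real \<times> real"
  define W where "W q = Complex (fst q) (- snd q)" for q :: "real \<times> real"
  define \<Lambda> where "\<Lambda> q = det2 ((D1 (Z q) - D1 (W q)) / (Z q - W q), (D2 (Z q) - D2 (W q)) / (Z q - W q))
                             (D1 (W q), D2 (W q))" for q
  have W0: "Complex s0 (- 0) \<in> U" using x0 by simp
  note l1 = dq_tendsto[OF hD1 x0] dq_tendsto[OF hD2 x0] lim_W[OF hD1 W0, simplified] lim_W[OF hD2 W0, simplified]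
  have "(\<Lambda> \<longlongrightarrow> det2 (DD1 ?x0, DD2 ?x0) (D1 ?x0, D2 ?x0)) ?F"
    unfolding \<Lambda>_def det2_def Z_def W_def DD1_def DD2_def fst_conv snd_conv
    by (intro tendsto_diff tendsto_mult l1)
  moreover have "det2 (DD1 ?x0, DD2 ?x0) (D1 ?x0, D2 ?x0) \<noteq> 0"
    using k0 by (simp add: \<kappa>_def det2_def algebra_simps)
  ultimately have ev1: "eventually (\<lambda>q. \<Lambda> q \<noteq> 0) ?F" by (rule tendsto_imp_eventually_ne)
  have "((\<lambda>q. det2 (D1 (Z q), D2 (Z q)) (DD1 (Z q), DD2 (Z q))) \<longlongrightarrow> \<kappa>) ?F"
    unfolding \<kappa>_def det2_def Z_def fst_conv snd_conv
    by (intro tendsto_diff tendsto_mult lim_Z[OF hD1 x0] lim_Z[OF hD2 x0] lim_Z[OF hDD1 x0] lim_Z[OF hDD2 x0])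
  then have ev2: "eventually (\<lambda>q. det2 (D1 (Z q), D2 (Z q)) (DD1 (Z q), DD2 (Z q)) \<noteq> 0) ?F"
    using k0 by (rule tendsto_imp_eventually_ne)
  have "((\<lambda>q. det2 (D1 (W q), D2 (W q)) (DD1 (W q), DD2 (W q))) \<longlongrightarrow> \<kappa>) ?F"
    unfolding \<kappa>_def det2_def W_def fst_conv snd_conv
    by (intro tendsto_diff tendsto_mult lim_W[OF hD1 W0, simplified] lim_W[OF hD2 W0, simplified]
        lim_W[OF hDD1 W0, simplified] lim_W[OF hDD2 W0, simplified])
  then have ev3: "eventually (\<lambda>q. det2 (D1 (W q), D2 (W q)) (DD1 (W q), DD2 (W q)) \<noteq> 0) ?F"
    using k0 by (rule tendsto_imp_eventually_ne)
  have "(s0, 0) \<in> Om" using x0 by (simp add: Om_def)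
  then have ev0: "eventually (\<lambda>q. q \<in> Om) ?F"
    using O_open by (simp add: eventually_at_filter eventually_mono[OF eventually_nhds_in_open])
  have "eventually (\<lambda>q. q \<in> Om \<and> \<Lambda> q \<noteq> 0 \<and> det2 (D1 (Z q), D2 (Z q)) (DD1 (Z q), DD2 (Z q)) \<noteq> 0
      \<and> det2 (D1 (W q), D2 (W q)) (DD1 (W q), DD2 (W q)) \<noteq> 0) ?F"
    using ev0 ev1 ev2 ev3 by (intro eventually_conj)
  then obtain d where d: "d > 0" and dP: "\<And>q. q \<in> {q. snd q > 0} \<Longrightarrow> q \<noteq> (s0,0) \<Longrightarrow> dist q (s0,0) < d \<Longrightarrow>
      q \<in> Om \<and> \<Lambda> q \<noteq> 0 \<and> det2 (D1 (Z q), D2 (Z q)) (DD1 (Z q), DD2 (Z q)) \<noteq> 0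
      \<and> det2 (D1 (W q), D2 (W q)) (DD1 (W q), DD2 (W q)) \<noteq> 0"
    unfolding eventually_at by blast
  show ?thesis
  proof (intro exI[of _ "d/2"] conjI allI impI)
    show "d/2 > 0" using d by simp
    fix s t assume st: "\<bar>s - s0\<bar> < d/2 \<and> 0 < t \<and> t < d/2"
    have "dist (s,t) (s0,0) \<le> \<bar>s - s0\<bar> + \<bar>t\<bar>"
      unfolding dist_Pair_Pair dist_real_def using sqrt_sum_squares_le_sum_abs by simp
    then have "dist (s,t) (s0,0) < d" using st by simp
    then have P: "(s,t) \<in> Om" "\<Lambda> (s,t) \<noteq> 0" "det2 (D1 (Z (s,t)), D2 (Z (s,t))) (DD1 (Z (s,t)), DD2 (Z (s,t))) \<noteq> 0"
      "det2 (D1 (W (s,t)), D2 (W (s,t))) (DD1 (W (s,t)), DD2 (W (s,t))) \<noteq> 0"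
      using dP[of "(s,t)"] st by auto
    have zw: "Complex s t \<in> U" "Complex s (-t) \<in> U" using P(1) by (auto simp: Om_def)
    show "(s,t) \<in> sdom U"
      using closed_segment_subset[OF zw(2) zw(1) U_convex] st by (simp add: sdom_def)
    have nz: "Z (s,t) - W (s,t) \<noteq> 0" using st by (simp add: Z_def W_def complex_eq_iff)
    have "Omega C (s,t) = \<i>/4 * (Z (s,t) - W (s,t)) * \<Lambda> (s,t)"
      unfolding Omega_Om[OF P(1)] \<Lambda>_def Z_def W_def fst_conv snd_conv
      by (rule omega_alg) (use nz in \<open>simp add: Z_def W_def\<close>)
    moreover have "\<i>/4 * (Z (s,t) - W (s,t)) * \<Lambda> (s,t) \<noteq> 0" using nz P(2) by simp
    ultimately show om: "Omega C (s,t) \<noteq> 0" by metis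
    have eqA: "Astr C (s,t) = \<i>/4 * det2 (D1 (Z (s,t)), D2 (Z (s,t))) (DD1 (Z (s,t)), DD2 (Z (s,t)))"
      using Astr_eq[OF zw(1)] by (simp add: vderivC vderiv2C Z_def)
    have A: "Astr C (s,t) \<noteq> 0" unfolding eqA using P(3) by simp
    have eqB: "Bstr C (s,t) = - \<i>/4 * det2 (D1 (W (s,t)), D2 (W (s,t))) (DD1 (W (s,t)), DD2 (W (s,t)))"
      using Bstr_eq[OF zw(2)] by (simp add: vderivC vderiv2C W_def)
    have B: "Bstr C (s,t) \<noteq> 0" unfolding eqB using P(4) by simp
    show "Jpick C (s,t) \<noteq> 0" using A B om by (simp add: Jpick_def)
  qed
qed

definition "PhiR q = (Re (fst (Pm C q)), Re (snd (Pm C q)))"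
definition "Jm q = mat2 (Re (D1 (Complex (fst q) (snd q)))) (- Im (D1 (Complex (fst q) (snd q))))
                         (Re (D2 (Complex (fst q) (snd q)))) (- Im (D2 (Complex (fst q) (snd q))))"
definition "n1 q = Im (C2 (Complex (fst q) (snd q)))"
definition "n2 q = - Im (C1 (Complex (fst q) (snd q)))"

lemma Om_refl:
  assumes q: "q \<in> Om"
  shows "C1 (Complex (fst q) (- snd q)) = cnj (C1 (Complex (fst q) (snd q)))"
    "C2 (Complex (fst q) (- snd q)) = cnj (C2 (Complex (fst q) (snd q)))"
    "D1 (Complex (fst q) (- snd q)) = cnj (D1 (Complex (fst q) (snd q)))"
    "D2 (Complex (fst q) (- snd q)) = cnj (D2 (Complex (fst q) (snd q)))"
proof -
  let ?z = "Complex (fst q) (snd q)"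
  have cz: "cnj ?z = Complex (fst q) (- snd q)" by (simp add: cnj_Complex)
  have z: "?z \<in> U" "cnj ?z \<in> U" "?z \<in> K" using O_mem[OF q] cz K_iff by auto
  show "C1 (Complex (fst q) (- snd q)) = cnj (C1 ?z)" using reflC1[OF z(1,2)] cz by simp
  show "C2 (Complex (fst q) (- snd q)) = cnj (C2 ?z)" using reflC2[OF z(1,2)] cz by simp
  show "D1 (Complex (fst q) (- snd q)) = cnj (D1 ?z)" using reflD1[OF z(3)] cz by simp
  show "D2 (Complex (fst q) (- snd q)) = cnj (D2 ?z)" using reflD2[OF z(3)] cz by simp
qed

lemma PhiR_Om: "q \<in> Om \<Longrightarrow> PhiR q = (Re (C1 (Complex (fst q) (snd q))), Re (C2 (Complex (fst q) (snd q))))"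
  using Om_refl[of q] by (simp add: PhiR_def Pm_duo duo_def P1E_def P2E_def)

lemma PhiR_deriv:
  assumes q: "q \<in> Om"
  shows "(PhiR has_derivative blinfun_apply (Jm q)) (at q)"
proof -
  have zU: "Complex (fst q) (snd q) \<in> U" using O_mem[OF q] by simp
  have "((\<lambda>q. (Re (C1 (Complex (fst q) (snd q))), Re (C2 (Complex (fst q) (snd q))))) has_derivative
        (\<lambda>d. (Re (D1 (Complex (fst q) (snd q)) * Complex (fst d) (snd d)),
              Re (D2 (Complex (fst q) (snd q)) * Complex (fst d) (snd d))))) (at q)"
    by (intro has_derivative_Pair has_derivative_Re hasdZ dC1 dC2 zU)
  moreover have "(\<lambda>d. (Re (D1 (Complex (fst q) (snd q)) * Complex (fst d) (snd d)),
              Re (D2 (Complex (fst q) (snd q)) * Complex (fst d) (snd d)))) = blinfun_apply (Jm q)"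
    by (rule ext) (simp add: Jm_def mat2_apply)
  ultimately have "((\<lambda>q. (Re (C1 (Complex (fst q) (snd q))), Re (C2 (Complex (fst q) (snd q))))) has_derivative
        blinfun_apply (Jm q)) (at q)" by simp
  then show ?thesis
    by (rule has_derivative_transform_within_open[OF _ O_open q]) (simp add: PhiR_Om)
qed

lemma contZ_Om: "h holomorphic_on U \<Longrightarrow> continuous_on Om (\<lambda>q. h (Complex (fst q) (snd q)))"
proof -
  assume h: "h holomorphic_on U"
  have "continuous_on Om (\<lambda>q::real\<times>real. Complex (fst q) (snd q))"
    using linear_continuous_on[OF bl_Complex] continuous_on_subset by blast
  moreover have "(\<lambda>q. Complex (fst q) (snd q)) ` Om \<subseteq> U" using O_mem by auto
  ultimately show ?thesis
    using continuous_on_compose2[OF holomorphic_on_imp_continuous_on[OF h]] by blast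
qed

lemma Jm_cont: "continuous_on Om Jm"
  unfolding Jm_def
  by (intro mat2_cont continuous_intros contZ_Om hD1 hD2)

lemma Fm_hasd:
  assumes q: "q \<in> Om"
  shows "((\<lambda>q. Re (Fm C q)) has_derivative (\<lambda>d. n1 q * fst (blinfun_apply (Jm q) d) + n2 q * snd (blinfun_apply (Jm q) d))) (at q)"
proof -
  let ?z = "Complex (fst q) (snd q)" and ?w = "Complex (fst q) (- snd q)"
  have zU: "?z \<in> U" "?w \<in> U" using O_mem[OF q] by auto
  let ?h = "\<lambda>d::real\<times>real. Complex (fst d) (snd d)" and ?k = "\<lambda>d::real\<times>real. Complex (fst d) (- snd d)"
  have "((\<lambda>q. Fcl (Complex (fst q) (snd q)) (Complex (fst q) (- snd q))) has_derivative
      (\<lambda>d. \<i>/4 * (gfun ?z * ?h d - gfun ?w * ?k d + (C1 ?z * (D2 ?w * ?k d) + D1 ?z * ?h d * C2 ?w)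
                 - (C2 ?z * (D1 ?w * ?k d) + D2 ?z * ?h d * C1 ?w)))) (at q)"
    unfolding Fcl_def
    by (intro has_derivative_mult_right has_derivative_add has_derivative_diff has_derivative_mult
        hasdZ hasdW dG dC1 dC2 zU)
  then have "((\<lambda>q. Re (Fcl (Complex (fst q) (snd q)) (Complex (fst q) (- snd q)))) has_derivative
      (\<lambda>d. Re (\<i>/4 * (gfun ?z * ?h d - gfun ?w * ?k d + (C1 ?z * (D2 ?w * ?k d) + D1 ?z * ?h d * C2 ?w)
                 - (C2 ?z * (D1 ?w * ?k d) + D2 ?z * ?h d * C1 ?w))))) (at q)"
    by (rule has_derivative_Re)
  moreover have "(\<lambda>d. Re (\<i>/4 * (gfun ?z * ?h d - gfun ?w * ?k d + (C1 ?z * (D2 ?w * ?k d) + D1 ?z * ?h d * C2 ?w)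
                 - (C2 ?z * (D1 ?w * ?k d) + D2 ?z * ?h d * C1 ?w))))
     = (\<lambda>d. n1 q * fst (blinfun_apply (Jm q) d) + n2 q * snd (blinfun_apply (Jm q) d))"
  proof
    fix d :: "real \<times> real"
    show "Re (\<i>/4 * (gfun ?z * ?h d - gfun ?w * ?k d + (C1 ?z * (D2 ?w * ?k d) + D1 ?z * ?h d * C2 ?w)
                 - (C2 ?z * (D1 ?w * ?k d) + D2 ?z * ?h d * C1 ?w))) =
          n1 q * fst (blinfun_apply (Jm q) d) + n2 q * snd (blinfun_apply (Jm q) d)"
      unfolding gfun_def Om_refl[OF q] n1_def n2_def Jm_def mat2_apply
      by (simp add: field_simps) (simp add: algebra_simps)?
  qed
  ultimately have "((\<lambda>q. Re (Fcl (Complex (fst q) (snd q)) (Complex (fst q) (- snd q)))) has_derivative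
      (\<lambda>d. n1 q * fst (blinfun_apply (Jm q) d) + n2 q * snd (blinfun_apply (Jm q) d))) (at q)" by simp
  then show ?thesis
    by (rule has_derivative_transform_within_open[OF _ O_open q])
       (auto simp: Om_def Fm_cl)
qed

lemma n1_hasd:
  assumes q: "q \<in> Om"
  shows "(n1 has_derivative (\<lambda>d. Im (D2 (Complex (fst q) (snd q)) * Complex (fst d) (snd d)))) (at q)"
  unfolding n1_def by (intro has_derivative_Im hasdZ dC2 O_mem[OF q])

lemma n2_hasd:
  assumes q: "q \<in> Om"
  shows "(n2 has_derivative (\<lambda>d. - Im (D1 (Complex (fst q) (snd q)) * Complex (fst d) (snd d)))) (at q)"
  unfolding n2_def by (intro has_derivative_minus has_derivative_Im hasdZ dC1 O_mem[OF q])

lemma graph: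
  assumes p0: "p0 \<in> Om" and om: "Omega C p0 \<noteq> 0"
  shows "definite_graph_at C p0"
proof -
  let ?z0 = "Complex (fst p0) (snd p0)"
  define a0 where "a0 = Re (D1 ?z0)"
  define b0 where "b0 = - Im (D1 ?z0)"
  define c0 where "c0 = Re (D2 ?z0)"
  define d0 where "d0 = - Im (D2 ?z0)"
  have J0: "Jm p0 = mat2 a0 b0 c0 d0" by (simp add: Jm_def a0_def b0_def c0_def d0_def)
  have "Omega C p0 = - of_real (a0 * d0 - b0 * c0) / 2"
    unfolding Omega_Om[OF p0] Om_refl[OF p0]
    by (simp add: det2_def a0_def b0_def c0_def d0_def complex_eq_iff field_simps) (simp add: algebra_simps)?
  then have Dl: "a0 * d0 - b0 * c0 \<noteq> 0"
  proof (intro notI)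
    assume e: "Omega C p0 = - of_real (a0 * d0 - b0 * c0) / 2" and h: "a0 * d0 - b0 * c0 = 0"
    from e have "Omega C p0 = 0" by (simp only: h of_real_0 minus_zero div_0)
    with om show False by simp
  qed
  obtain U' V g g' where U': "open U'" "U' \<subseteq> Om" "p0 \<in> U'" and V: "open V" "PhiR p0 \<in> V"
    and hom: "homeomorphism U' V PhiR g"
    and gd: "\<And>y. y \<in> V \<Longrightarrow> (g has_derivative (g' y)) (at y)"
    and g': "\<And>y. y \<in> V \<Longrightarrow> g' y = inv (blinfun_apply (Jm (g y)))"
    and bj: "\<And>y. y \<in> V \<Longrightarrow> bij (blinfun_apply (Jm (g y)))"
    by (rule inverse_function_theorem[OF O_open PhiR_deriv Jm_cont p0 inv_mat2[OF Dl, folded J0]]) (assumption, blast)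
  have hm: "PhiR ` U' = V" "g ` V = U'" "\<And>x. x \<in> U' \<Longrightarrow> g (PhiR x) = x" "\<And>y. y \<in> V \<Longrightarrow> PhiR (g y) = y"
    using hom unfolding homeomorphism_def by auto
  have gOm: "y \<in> V \<Longrightarrow> g y \<in> Om" for y using hm(2) U'(2) by auto
  have Jinv: "blinfun_apply (Jm (g y)) (g' y d) = d" if y: "y \<in> V" for y d
    using g'[OF y] bij_is_surj[OF bj[OF y]] by (simp add: surj_f_inv_f)
  define u where "u x = Re (Fm C (g x))" for x
  have hasd_u: "(u has_derivative (\<lambda>d. n1 (g y) * fst d + n2 (g y) * snd d)) (at y)" if y: "y \<in> V" for y
  proof -
    have "((\<lambda>x. Re (Fm C (g x))) has_derivative
        (\<lambda>d. n1 (g y) * fst (blinfun_apply (Jm (g y)) (g' y d)) + n2 (g y) * snd (blinfun_apply (Jm (g y)) (g' y d)))) (at y)"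
      using has_derivative_compose[OF gd[OF y] Fm_hasd[OF gOm[OF y]]] by simp
    then show ?thesis unfolding u_def Jinv[OF y] .
  qed
  have pdu: "pd1 u y = n1 (g y)" "pd2 u y = n2 (g y)" if y: "y \<in> V" for y
    using pd_of_hasd[OF hasd_u[OF y]] by simp_all
  have hn1: "((\<lambda>x. n1 (g x)) has_derivative (\<lambda>d. Im (D2 (Complex (fst (g y)) (snd (g y))) *
      Complex (fst (g' y d)) (snd (g' y d))))) (at y)" if y: "y \<in> V" for y
    using has_derivative_compose[OF gd[OF y] n1_hasd[OF gOm[OF y]]] by simp
  have hn2: "((\<lambda>x. n2 (g x)) has_derivative (\<lambda>d. - Im (D1 (Complex (fst (g y)) (snd (g y))) *
      Complex (fst (g' y d)) (snd (g' y d))))) (at y)" if y: "y \<in> V" for y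
    using has_derivative_compose[OF gd[OF y] n2_hasd[OF gOm[OF y]]] by simp
  have Phi_eq: "(\<lambda>q. (Re (fst (Pm C q)), Re (snd (Pm C q)))) = PhiR" by (simp add: fun_eq_iff PhiR_def)
  show ?thesis
    unfolding definite_graph_at_def Phi_eq
  proof (rule exI[of _ U'], rule exI[of _ V], rule exI[of _ u], intro conjI ballI)
    show "open U'" "p0 \<in> U'" "open V" using U' V by auto
    show "bij_betw PhiR U' V"
      by (rule bij_betw_byWitness[of U' g PhiR V]) (use hm in auto)
  next
    fix q assume q: "q \<in> U'"
    then have qO: "q \<in> Om" using U' by auto
    have "Im (Fm C q) = 0" using real_parts(3)[of "fst q" "snd q"] O_mem[OF qO] by simp
    moreover have "u (PhiR q) = Re (Fm C q)" using hm(3)[OF q] by (simp add: u_def)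
    ultimately show "Fm C q = of_real (u (Re (fst (Pm C q)), Re (snd (Pm C q))))"
      by (simp add: complex_eq_iff PhiR_def)
  next
    fix x assume x: "x \<in> V"
    show "u differentiable (at x)" using hasd_u[OF x] unfolding differentiable_def by blast
    show "pd1 u differentiable (at x)"
      by (rule differentiable_cong_open[OF V(1) x _, of _ "\<lambda>y. n1 (g y)"])
         (use pdu hn1[OF x] in \<open>auto simp: differentiable_def\<close>)
    show "pd2 u differentiable (at x)"
      by (rule differentiable_cong_open[OF V(1) x _, of _ "\<lambda>y. n2 (g y)"])
         (use pdu hn2[OF x] in \<open>auto simp: differentiable_def\<close>)
    have e11: "pd1 (pd1 u) x = pd1 (\<lambda>y. n1 (g y)) x" by (rule pd1_cong[OF V(1) x]) (simp add: pdu)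
    have e22: "pd2 (pd2 u) x = pd2 (\<lambda>y. n2 (g y)) x" by (rule pd2_cong[OF V(1) x]) (simp add: pdu)
    have e12: "pd1 (pd2 u) x = pd1 (\<lambda>y. n2 (g y)) x" by (rule pd1_cong[OF V(1) x]) (simp add: pdu)
    have e21: "pd2 (pd1 u) x = pd2 (\<lambda>y. n1 (g y)) x" by (rule pd2_cong[OF V(1) x]) (simp add: pdu)
    let ?al = "D1 (Complex (fst (g x)) (snd (g x)))" and ?be = "D2 (Complex (fst (g x)) (snd (g x)))"
    obtain x1 y1 where v1: "g' x (1,0) = (x1, y1)" by (cases "g' x (1,0)")
    obtain x2 y2 where v2: "g' x (0,1) = (x2, y2)" by (cases "g' x (0,1)")
    have J1: "Re ?al * x1 + - Im ?al * y1 = 1" "Re ?be * x1 + - Im ?be * y1 = 0"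
      using Jinv[OF x, of "(1,0)"] v1 by (simp_all add: Jm_def mat2_apply)
    have J2: "Re ?al * x2 + - Im ?al * y2 = 0" "Re ?be * x2 + - Im ?be * y2 = 1"
      using Jinv[OF x, of "(0,1)"] v2 by (simp_all add: Jm_def mat2_apply)
    have H: "(Re ?be * y1 + Im ?be * x1) * (- (Re ?al * y2 + Im ?al * x2)) - (- (Re ?al * y1 + Im ?al * x1)) * (Re ?be * y2 + Im ?be * x2) = 1"
      by (rule hess_alg) (use J1 J2 in auto)
    show "pd1 (pd1 u) x * pd2 (pd2 u) x - pd1 (pd2 u) x * pd2 (pd1 u) x = 1"
      unfolding e11 e22 e12 e21 pd_of_hasd[OF hn1[OF x]] pd_of_hasd[OF hn2[OF x]] v1 v2
      using H by (simp add: algebra_simps)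
  qed
qed

end


theorem mainTheorem7:
  fixes C :: "complex \<Rightarrow> complex \<times> complex" and U :: "complex set" and a b :: real
  assumes U_open: "open U" and U_convex: "convex U"
    and ab: "a < b" and I_sub: "of_real ` {a<..<b} \<subseteq> U"
    and hol1: "(\<lambda>z. fst (C z)) holomorphic_on U"
    and hol2: "(\<lambda>z. snd (C z)) holomorphic_on U"
    and real_on_I: "\<forall>r\<in>{a<..<b}. Im (fst (C (of_real r))) = 0 \<and> Im (snd (C (of_real r))) = 0"
    and regular: "\<forall>r\<in>{a<..<b}. vderiv C (of_real r) \<noteq> 0"
    and convex_arc: "\<forall>r\<in>{a<..<b}. Re (det2 (vderiv C (of_real r)) (vderiv (vderiv C) (of_real r))) \<ge> 0"
  shows
    "(\<forall>st\<in>sdom U.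
        Im (fst (Pm C st)) = 0 \<and> Im (snd (Pm C st)) = 0 \<and> Im (Fm C st) = 0 \<and>
        Qm C differentiable (at st) \<and> pd1 (Qm C) differentiable (at st) \<and>
        pd2 (Qm C) differentiable (at st) \<and>
        det3 (pd1 (Qm C) st) (pd2 (Qm C) st) (pd1 (pd1 (Qm C)) st)
          = det3 (pd1 (Qm C) st) (pd2 (Qm C) st) (pd2 (pd2 (Qm C)) st) \<and>
        det3 (pd1 (Qm C) st) (pd2 (Qm C) st) (pd2 (pd1 (Qm C)) st) = 0 \<and>
        (Omega C st \<noteq> 0 \<longrightarrow> definite_graph_at C st))
   \<and> (\<forall>(\<psi> :: complex \<Rightarrow> complex) V a' b'.
        open V \<and> convex V \<and> a' < b' \<and> of_real ` {a'<..<b'} \<subseteq> V \<and>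
        \<psi> holomorphic_on V \<and> \<psi> ` V \<subseteq> U \<and>
        (\<forall>r\<in>{a'<..<b'}. Im (\<psi> (of_real r)) = 0 \<and> Re (deriv \<psi> (of_real r)) > 0)
        \<longrightarrow> (\<forall>s t. (s, t) \<in> sdom V \<and> Im (\<psi> (Complex s t)) > 0 \<longrightarrow>
               Fm (C \<circ> \<psi>) (s, t) = Fm C (Re (\<psi> (Complex s t)), Im (\<psi> (Complex s t))) \<and>
               Pm (C \<circ> \<psi>) (s, t) = Pm C (Re (\<psi> (Complex s t)), Im (\<psi> (Complex s t))) \<and>
               Qm (C \<circ> \<psi>) (s, t) = Qm C (Re (\<psi> (Complex s t)), Im (\<psi> (Complex s t)))))
   \<and> (\<forall>st\<in>sdom U.
        Omega C st = - \<i> * omegac C (of_real (fst st)) (\<i> * of_real (snd st)) \<and>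
        Astr C st = \<i> / 4 * det2 (vderiv C (Complex (fst st) (snd st)))
                                 (vderiv (vderiv C) (Complex (fst st) (snd st))) \<and>
        Bstr C st = - \<i> / 4 * det2 (vderiv C (Complex (fst st) (- snd st)))
                                   (vderiv (vderiv C) (Complex (fst st) (- snd st))))
   \<and> ((\<forall>r\<in>{a<..<b}. Re (det2 (vderiv C (of_real r)) (vderiv (vderiv C) (of_real r))) > 0)
        \<longrightarrow> (\<forall>s0\<in>{a<..<b}. \<exists>\<epsilon>>0. \<forall>s t. \<bar>s - s0\<bar> < \<epsilon> \<and> 0 < t \<and> t < \<epsilon> \<longrightarrow>
               (s, t) \<in> sdom U \<and> Omega C (s, t) \<noteq> 0 \<and> Jpick C (s, t) \<noteq> 0))"
  proof -
  interpret crv C U a b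
    by unfold_locales (use U_open U_convex ab I_sub hol1 hol2 real_on_I in auto)
  have P1: "\<forall>st\<in>sdom U.
        Im (fst (Pm C st)) = 0 \<and> Im (snd (Pm C st)) = 0 \<and> Im (Fm C st) = 0 \<and>
        Qm C differentiable (at st) \<and> pd1 (Qm C) differentiable (at st) \<and>
        pd2 (Qm C) differentiable (at st) \<and>
        det3 (pd1 (Qm C) st) (pd2 (Qm C) st) (pd1 (pd1 (Qm C)) st)
          = det3 (pd1 (Qm C) st) (pd2 (Qm C) st) (pd2 (pd2 (Qm C)) st) \<and>
        det3 (pd1 (Qm C) st) (pd2 (Qm C) st) (pd2 (pd1 (Qm C)) st) = 0 \<and>
        (Omega C st \<noteq> 0 \<longrightarrow> definite_graph_at C st)"
  proof
    fix st assume st: "st \<in> sdom U"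
    obtain s t where ste: "st = (s,t)" by (cases st)
    have zw: "Complex s t \<in> U" "Complex s (-t) \<in> U" using sdom_mem st ste by auto
    have p: "st \<in> Om" using zw ste by (simp add: Om_def)
    show "Im (fst (Pm C st)) = 0 \<and> Im (snd (Pm C st)) = 0 \<and> Im (Fm C st) = 0 \<and>
        Qm C differentiable (at st) \<and> pd1 (Qm C) differentiable (at st) \<and>
        pd2 (Qm C) differentiable (at st) \<and>
        det3 (pd1 (Qm C) st) (pd2 (Qm C) st) (pd1 (pd1 (Qm C)) st)
          = det3 (pd1 (Qm C) st) (pd2 (Qm C) st) (pd2 (pd2 (Qm C)) st) \<and>
        det3 (pd1 (Qm C) st) (pd2 (Qm C) st) (pd2 (pd1 (Qm C)) st) = 0 \<and>
        (Omega C st \<noteq> 0 \<longrightarrow> definite_graph_at C st)"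
      using real_parts[OF zw] Qm_diffs[OF p] iso_Qm[OF p] graph[OF p] ste by simp
  qed
  have P2: "\<forall>(\<psi> :: complex \<Rightarrow> complex) V a' b'.
        open V \<and> convex V \<and> a' < b' \<and> of_real ` {a'<..<b'} \<subseteq> V \<and>
        \<psi> holomorphic_on V \<and> \<psi> ` V \<subseteq> U \<and>
        (\<forall>r\<in>{a'<..<b'}. Im (\<psi> (of_real r)) = 0 \<and> Re (deriv \<psi> (of_real r)) > 0)
        \<longrightarrow> (\<forall>s t. (s, t) \<in> sdom V \<and> Im (\<psi> (Complex s t)) > 0 \<longrightarrow>
               Fm (C \<circ> \<psi>) (s, t) = Fm C (Re (\<psi> (Complex s t)), Im (\<psi> (Complex s t))) \<and>
               Pm (C \<circ> \<psi>) (s, t) = Pm C (Re (\<psi> (Complex s t)), Im (\<psi> (Complex s t))) \<and>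
               Qm (C \<circ> \<psi>) (s, t) = Qm C (Re (\<psi> (Complex s t)), Im (\<psi> (Complex s t))))"
  proof (intro allI impI)
    fix \<psi> :: "complex \<Rightarrow> complex" and V a' b' s t
    assume H: "open V \<and> convex V \<and> a' < b' \<and> of_real ` {a'<..<b'} \<subseteq> V \<and>
        \<psi> holomorphic_on V \<and> \<psi> ` V \<subseteq> U \<and>
        (\<forall>r\<in>{a'<..<b'}. Im (\<psi> (of_real r)) = 0 \<and> Re (deriv \<psi> (of_real r)) > 0)"
      and st: "(s, t) \<in> sdom V \<and> Im (\<psi> (Complex s t)) > 0"
    have pr: "\<forall>r\<in>{a'<..<b'}. Im (\<psi> (of_real r)) = 0" using H by blast
    have zw: "Complex s t \<in> V" "Complex s (-t) \<in> V" using sdom_mem st by auto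
    show "Fm (C \<circ> \<psi>) (s, t) = Fm C (Re (\<psi> (Complex s t)), Im (\<psi> (Complex s t))) \<and>
               Pm (C \<circ> \<psi>) (s, t) = Pm C (Re (\<psi> (Complex s t)), Im (\<psi> (Complex s t))) \<and>
               Qm (C \<circ> \<psi>) (s, t) = Qm C (Re (\<psi> (Complex s t)), Im (\<psi> (Complex s t)))"
      using reparam[of V a' b' \<psi> s t] H pr zw by blast
  qed
  have P3: "\<forall>st\<in>sdom U.
        Omega C st = - \<i> * omegac C (of_real (fst st)) (\<i> * of_real (snd st)) \<and>
        Astr C st = \<i> / 4 * det2 (vderiv C (Complex (fst st) (snd st)))
                                 (vderiv (vderiv C) (Complex (fst st) (snd st))) \<and>
        Bstr C st = - \<i> / 4 * det2 (vderiv C (Complex (fst st) (- snd st)))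
                                   (vderiv (vderiv C) (Complex (fst st) (- snd st)))"
  proof
    fix st assume st: "st \<in> sdom U"
    obtain s t where ste: "st = (s,t)" by (cases st)
    have zw: "Complex s t \<in> U" "Complex s (-t) \<in> U" using sdom_mem st ste by auto
    have p: "st \<in> Om" using zw ste by (simp add: Om_def)
    show "Omega C st = - \<i> * omegac C (of_real (fst st)) (\<i> * of_real (snd st)) \<and>
        Astr C st = \<i> / 4 * det2 (vderiv C (Complex (fst st) (snd st)))
                                 (vderiv (vderiv C) (Complex (fst st) (snd st))) \<and>
        Bstr C st = - \<i> / 4 * det2 (vderiv C (Complex (fst st) (- snd st)))
                                   (vderiv (vderiv C) (Complex (fst st) (- snd st)))"
      using Omega_omegac[OF p] Astr_eq[OF zw(1)] Bstr_eq[OF zw(2)] ste by simp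
  qed
  have P4: "(\<forall>r\<in>{a<..<b}. Re (det2 (vderiv C (of_real r)) (vderiv (vderiv C) (of_real r))) > 0)
        \<longrightarrow> (\<forall>s0\<in>{a<..<b}. \<exists>\<epsilon>>0. \<forall>s t. \<bar>s - s0\<bar> < \<epsilon> \<and> 0 < t \<and> t < \<epsilon> \<longrightarrow>
               (s, t) \<in> sdom U \<and> Omega C (s, t) \<noteq> 0 \<and> Jpick C (s, t) \<noteq> 0)"
    using pick_nonzero by blast
  show ?thesis using P1 P2 P3 P4 by blast
qed

end
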